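(* Let $\mathcal{H}$ be a complex Hilbert space and let $A\in\mathcal{B}(\mathcal{H})$ satisfy $mI\le A\le MI$ for some scalars $0<m<M$. Then the following assertions are equivalent (in each, $\Phi$ ranges over all unital positive linear maps $\Phi:\mathcal{B}(\mathcal{H})\to\mathcal{B}(\mathcal{K})$, $\mathcal K$ a complex Hilbert space): (i) $\Phi(A^{-1})\le\left(\frac{M+m}{2\sqrt{Mm}}\right)^2\Phi(A)^{-1}$ for every such $\Phi$; (ii) $\langle\Phi(A^{-1})x,x\rangle\le\left(\frac{M+m}{2\sqrt{Mm}}\right)^2\langle\Phi(A)x,x\rangle^{-1}$ for every such $\Phi$ and every unit vector $x\in\mathcal{K}$; (iii) $\Phi(A^{-1})\sharp\Phi(A)\le\frac{M+m}{2\sqrt{Mm}}I$ for every such $\Phi$; (iv) $\Phi(A^2)\le\left(\frac{M+m}{2\sqrt{Mm}}\right)^2\Phi(A)^2$ for every such $\Phi$.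
   Context: $\mathcal{B}(\mathcal{H})$ denotes the bounded linear operators on $\mathcal{H}$; $\le$ is the Löwner order. A linear map $\Phi:\mathcal{B}(\mathcal{H})\to\mathcal{B}(\mathcal{K})$ is positive if it maps positive operators to positive operators, and unital if $\Phi(I)=I$. For positive invertible operators $X,Y$, the geometric mean is $X\sharp Y=X^{1/2}\left(X^{-1/2}YX^{-1/2}\right)^{1/2}X^{1/2}$. *)

theory Defs
  imports "HOL-Analysis.Analysis"
begin

text \<open>A complex Hilbert space, presented as a real Hilbert space together with a
  complex structure J (multiplication by the imaginary unit): J is real-linear,
  J (J x) = -x and J is orthogonal.  Complex scalar multiplication and the complex
  inner product (linear in the first argument) are derived from J.\<close>

class chilbert = real_inner + complete_space +
  fixes imult :: "'a \<Rightarrow> 'a"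
  assumes imult_add: "imult (x + y) = imult x + imult y"
    and imult_scaleR: "imult (r *\<^sub>R x) = r *\<^sub>R imult x"
    and imult_imult: "imult (imult x) = - x"
    and imult_inner: "inner (imult x) (imult y) = inner x y"

definition cscale :: "complex \<Rightarrow> 'a::chilbert \<Rightarrow> 'a" where
  "cscale c x = Re c *\<^sub>R x + Im c *\<^sub>R imult x"

definition cinner :: "'a::chilbert \<Rightarrow> 'a \<Rightarrow> complex" where
  "cinner x y = Complex (inner x y) (inner x (imult y))"

text \<open>Bounded (complex-)linear operators B(H).\<close>
definition bop :: "('a::chilbert \<Rightarrow> 'a) set" where
  "bop = {T. bounded_linear T \<and> (\<forall>x. T (imult x) = imult (T x))}"

definition pos_op :: "('a::chilbert \<Rightarrow> 'a) \<Rightarrow> bool" where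
  "pos_op T \<longleftrightarrow> T \<in> bop \<and> (\<forall>x. Im (cinner (T x) x) = 0 \<and> 0 \<le> Re (cinner (T x) x))"

definition loewner_le :: "('a::chilbert \<Rightarrow> 'a) \<Rightarrow> ('a \<Rightarrow> 'a) \<Rightarrow> bool" where
  "loewner_le S T \<longleftrightarrow> S \<in> bop \<and> T \<in> bop \<and> pos_op (\<lambda>x. T x - S x)"

definition op_inv :: "('a::chilbert \<Rightarrow> 'a) \<Rightarrow> ('a \<Rightarrow> 'a)" where
  "op_inv T = inv T"

definition op_sqrt :: "('a::chilbert \<Rightarrow> 'a) \<Rightarrow> ('a \<Rightarrow> 'a)" where
  "op_sqrt T = (THE S. pos_op S \<and> S \<circ> S = T)"

definition gmean :: "('a::chilbert \<Rightarrow> 'a) \<Rightarrow> ('a \<Rightarrow> 'a) \<Rightarrow> ('a \<Rightarrow> 'a)" where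
  "gmean X Y = op_sqrt X \<circ>
      op_sqrt (op_inv (op_sqrt X) \<circ> Y \<circ> op_inv (op_sqrt X)) \<circ> op_sqrt X"

definition unital_pos_map :: "(('a::chilbert \<Rightarrow> 'a) \<Rightarrow> ('b::chilbert \<Rightarrow> 'b)) \<Rightarrow> bool" where
  "unital_pos_map \<Phi> \<longleftrightarrow>
     (\<forall>T\<in>bop. \<Phi> T \<in> bop) \<and>
     (\<forall>S\<in>bop. \<forall>T\<in>bop. \<Phi> (\<lambda>x. S x + T x) = (\<lambda>y. \<Phi> S y + \<Phi> T y)) \<and>
     (\<forall>c. \<forall>T\<in>bop. \<Phi> (\<lambda>x. cscale c (T x)) = (\<lambda>y. cscale c (\<Phi> T y))) \<and>
     (\<forall>T. pos_op T \<longrightarrow> pos_op (\<Phi> T)) \<and>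
     \<Phi> id = id"

end

theory Submission
  imports Defs "HOL-Computational_Algebra.Formal_Power_Series"
begin

instance chilbert \<subseteq> banach ..

definition ca :: "nat \<Rightarrow> real" where "ca n = (-1)^n * ((1/2) gchoose n)"

lemma ca_0[simp]: "ca 0 = 1" by (simp add: ca_def)

lemma ca_Suc: "ca (Suc k) = ca k * ((of_nat k - 1/2) / (of_nat k + 1))"
proof -
  have "(1/2::real) * ((1/2) gchoose k) = of_nat k * ((1/2) gchoose k) + of_nat (Suc k) * ((1/2) gchoose Suc k)"
    by (rule gbinomial_mult_1)
  hence eq: "((1/2::real) gchoose Suc k) = ((1/2) gchoose k) * (1/2 - of_nat k) / (of_nat k + 1)"
    by (simp add: field_simps)
  have "ca (Suc k) = (-1)^k * ((1/2) gchoose k) * (-(1/2 - of_nat k) / (of_nat k + 1))"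
    unfolding ca_def eq by (simp add: field_simps)
  also have "(-(1/2 - of_nat k) / (of_nat k + 1)) = ((of_nat k - 1/2) / (of_nat k + 1) :: real)"
    by (simp add: field_simps)
  also have "(-1)^k * ((1/2) gchoose k) = ca k" by (simp add: ca_def)
  finally show ?thesis .
qed

lemma ca_1: "ca 1 = -1/2" using ca_Suc[of 0] by simp

lemma ca_neg: "n \<ge> 1 \<Longrightarrow> ca n < 0"
proof (induction n)
  case 0 thus ?case by simp
next
  case (Suc n)
  show ?case
  proof (cases "n = 0")
    case True thus ?thesis using ca_1 by simp
  next
    case False
    hence "ca n < 0" using Suc by simp
    moreover have "real n \<ge> 1" using False by simp
    hence "(of_nat n - 1/2) / (of_nat n + 1) > (0::real)"
      by (intro divide_pos_pos) auto
    ultimately show ?thesis unfolding ca_Suc by (rule mult_neg_pos)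
  qed
qed

lemma ca_abs_sum_eq: "(\<Sum>k<Suc N. \<bar>ca k\<bar>) = 2 - 2 * (of_nat N + 1) * \<bar>ca (Suc N)\<bar>"
proof (induction N)
  case 0 thus ?case using ca_1 by simp
next
  case (Suc N)
  have p: "(of_nat (Suc N) - 1/2) / (of_nat (Suc N) + 1) = ((of_nat N + 1/2) / (of_nat N + 2) :: real)"
    by (simp add: field_simps)
  have "(of_nat N + 1/2) / (of_nat N + 2) > (0::real)" by (intro divide_pos_pos) auto
  hence a: "\<bar>ca (Suc (Suc N))\<bar> = \<bar>ca (Suc N)\<bar> * ((of_nat N + 1/2) / (of_nat N + 2))"
    using ca_Suc[of "Suc N"] unfolding p by (simp add: abs_mult)
  have b: "2 * (of_nat (Suc N) + 1) * \<bar>ca (Suc (Suc N))\<bar> = (2 * of_nat N + 1) * \<bar>ca (Suc N)\<bar>"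
    unfolding a by (simp add: field_simps)
  have s: "(\<Sum>k<Suc (Suc N). \<bar>ca k\<bar>) = (\<Sum>k<Suc N. \<bar>ca k\<bar>) + \<bar>ca (Suc N)\<bar>" by (rule sum.lessThan_Suc)
  show ?case unfolding s Suc.IH b by (simp add: algebra_simps)
qed

lemma ca_abs_sum_le: "(\<Sum>k<N. \<bar>ca k\<bar>) \<le> 2"
proof (cases N)
  case 0 thus ?thesis by simp
next
  case (Suc M) thus ?thesis using ca_abs_sum_eq[of M] by simp
qed

lemma ca_summable: "summable (\<lambda>n. \<bar>ca n\<bar>)"
  by (rule summableI_nonneg_bounded[OF _ ca_abs_sum_le]) simp

lemma ca_suminf_le: "(\<Sum>n. \<bar>ca n\<bar>) \<le> 2"
  by (rule suminf_le_const[OF ca_summable ca_abs_sum_le])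

lemma ca_cauchy: "(\<Sum>i\<le>N. ca i * ca (N - i)) = (if N = 0 then 1 else if N = 1 then -1 else 0)"
proof -
  have "(\<Sum>i\<le>N. ca i * ca (N - i)) = (\<Sum>i=0..N. (-1)^N * (((1/2::real) gchoose i) * ((1/2) gchoose (N - i))))"
    unfolding atMost_atLeast0
  proof (rule sum.cong[OF refl])
    fix i assume "i \<in> {0..N}"
    hence "(-1::real)^i * (-1)^(N-i) = (-1)^N" by (simp add: power_add[symmetric])
    thus "ca i * ca (N - i) = (-1)^N * (((1/2::real) gchoose i) * ((1/2) gchoose (N - i)))"
      unfolding ca_def by (metis (no_types, lifting) mult.assoc mult.left_commute)
  qed
  also have "\<dots> = (-1)^N * ((1/2 + 1/2::real) gchoose N)"
    by (simp add: sum_distrib_left[symmetric] gbinomial_Vandermonde)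
  also have "((1/2 + 1/2::real) gchoose N) = of_nat (1 choose N)"
    by (simp add: binomial_gbinomial)
  finally show ?thesis
    by (cases N; cases "N = 1") (auto simp: binomial_eq_0)
qed

lemma Cauchy_product_sums_compose:
  fixes a b :: "nat \<Rightarrow> ('a::banach \<Rightarrow>\<^sub>L 'a)"
  assumes a: "summable (\<lambda>k. norm (a k))"
    and b: "summable (\<lambda>k. norm (b k))"
  shows "(\<lambda>k. \<Sum>i\<le>k. a i o\<^sub>L b (k - i)) sums ((\<Sum>k. a k) o\<^sub>L (\<Sum>k. b k))"
proof -
  let ?S1 = "\<lambda>n::nat. {..<n} \<times> {..<n}"
  let ?S2 = "\<lambda>n::nat. {(i,j). i + j < n}"
  have S1_mono: "\<And>m n. m \<le> n \<Longrightarrow> ?S1 m \<subseteq> ?S1 n" by auto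
  have S2_le_S1: "\<And>n. ?S2 n \<subseteq> ?S1 n" by auto
  have S1_le_S2: "\<And>n. ?S1 (n div 2) \<subseteq> ?S2 n" by auto
  have finite_S1: "\<And>n. finite (?S1 n)" by simp
  with S2_le_S1 have finite_S2: "\<And>n. finite (?S2 n)" by (rule finite_subset)
  let ?g = "\<lambda>(i,j). a i o\<^sub>L b j"
  let ?f = "\<lambda>(i,j). norm (a i) * norm (b j)"
  have f_nonneg: "\<And>x. 0 \<le> ?f x" by auto
  then have norm_sum_f: "\<And>A. norm (sum ?f A) = sum ?f A"
    unfolding real_norm_def
    by (simp only: abs_of_nonneg sum_nonneg [rule_format])
  have sp: "\<And>n. (\<Sum>k<n. a k) o\<^sub>L (\<Sum>k<n. b k) = sum ?g (?S1 n)"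
  proof -
    fix n
    have "(\<Sum>k<n. a k) o\<^sub>L (\<Sum>k<n. b k) = (\<Sum>i<n. a i o\<^sub>L (\<Sum>k<n. b k))"
      by (rule bounded_bilinear.sum_left[OF bounded_bilinear_blinfun_compose])
    also have "\<dots> = (\<Sum>i<n. \<Sum>j<n. a i o\<^sub>L b j)"
      by (simp add: bounded_bilinear.sum_right[OF bounded_bilinear_blinfun_compose])
    also have "\<dots> = sum ?g (?S1 n)" by (simp add: sum.cartesian_product)
    finally show "(\<Sum>k<n. a k) o\<^sub>L (\<Sum>k<n. b k) = sum ?g (?S1 n)" .
  qed
  have "(\<lambda>n. (\<Sum>k<n. a k) o\<^sub>L (\<Sum>k<n. b k)) \<longlonglongrightarrow> ((\<Sum>k. a k) o\<^sub>L (\<Sum>k. b k))"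
    by (intro bounded_bilinear.tendsto[OF bounded_bilinear_blinfun_compose]
        summable_LIMSEQ summable_norm_cancel [OF a] summable_norm_cancel [OF b])
  then have 1: "(\<lambda>n. sum ?g (?S1 n)) \<longlonglongrightarrow> ((\<Sum>k. a k) o\<^sub>L (\<Sum>k. b k))"
    by (simp only: sp)
  have "(\<lambda>n. (\<Sum>k<n. norm (a k)) * (\<Sum>k<n. norm (b k))) \<longlonglongrightarrow> (\<Sum>k. norm (a k)) * (\<Sum>k. norm (b k))"
    using a b by (intro tendsto_mult summable_LIMSEQ)
  then have "(\<lambda>n. sum ?f (?S1 n)) \<longlonglongrightarrow> (\<Sum>k. norm (a k)) * (\<Sum>k. norm (b k))"
    by (simp only: sum_product sum.Sigma [rule_format] finite_lessThan)
  then have "convergent (\<lambda>n. sum ?f (?S1 n))"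
    by (rule convergentI)
  then have Cauchy: "Cauchy (\<lambda>n. sum ?f (?S1 n))"
    by (rule convergent_Cauchy)
  have "Zfun (\<lambda>n. sum ?f (?S1 n - ?S2 n)) sequentially"
  proof (rule ZfunI, simp only: eventually_sequentially norm_sum_f)
    fix r :: real
    assume r: "0 < r"
    from CauchyD [OF Cauchy r] obtain N
      where "\<forall>m\<ge>N. \<forall>n\<ge>N. norm (sum ?f (?S1 m) - sum ?f (?S1 n)) < r" ..
    then have "\<And>m n. N \<le> n \<Longrightarrow> n \<le> m \<Longrightarrow> norm (sum ?f (?S1 m - ?S1 n)) < r"
      by (simp only: sum_diff finite_S1 S1_mono)
    then have N: "\<And>m n. N \<le> n \<Longrightarrow> n \<le> m \<Longrightarrow> sum ?f (?S1 m - ?S1 n) < r"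
      by (simp only: norm_sum_f)
    show "\<exists>N. \<forall>n\<ge>N. sum ?f (?S1 n - ?S2 n) < r"
    proof (intro exI allI impI)
      fix n
      assume "2 * N \<le> n"
      then have n: "N \<le> n div 2" by simp
      have "sum ?f (?S1 n - ?S2 n) \<le> sum ?f (?S1 n - ?S1 (n div 2))"
        by (intro sum_mono2 finite_Diff finite_S1 f_nonneg Diff_mono subset_refl S1_le_S2)
      also have "\<dots> < r"
        using n div_le_dividend by (rule N)
      finally show "sum ?f (?S1 n - ?S2 n) < r" .
    qed
  qed
  then have "Zfun (\<lambda>n. sum ?g (?S1 n - ?S2 n)) sequentially"
    apply (rule Zfun_le [rule_format])
    apply (simp only: norm_sum_f)
    apply (rule order_trans [OF norm_sum sum_mono])
    apply (auto simp add: norm_blinfun_compose)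
    done
  then have 2: "(\<lambda>n. sum ?g (?S1 n) - sum ?g (?S2 n)) \<longlonglongrightarrow> 0"
    unfolding tendsto_Zfun_iff diff_0_right
    by (simp only: sum_diff finite_S1 S2_le_S1)
  with 1 have "(\<lambda>n. sum ?g (?S2 n)) \<longlonglongrightarrow> ((\<Sum>k. a k) o\<^sub>L (\<Sum>k. b k))"
    by (rule Lim_transform2)
  then show ?thesis
    by (simp only: sums_def sum.triangle_reindex)
qed


section \<open>Basic facts on the complex structure\<close>

lemma imult_linear: "linear (imult :: 'a::chilbert \<Rightarrow> 'a)"
  by (rule linearI) (simp_all add: imult_add imult_scaleR)

lemma norm_imult[simp]: "norm (imult x) = norm (x::'a::chilbert)"
  by (simp add: norm_eq_sqrt_inner imult_inner)

lemma bl_imult: "bounded_linear (imult :: 'a::chilbert \<Rightarrow> 'a)"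
proof -
  interpret linear imult by (rule imult_linear)
  show ?thesis by unfold_locales (rule exI[of _ 1], simp)
qed

lemma imult_zero[simp]: "imult 0 = (0::'a::chilbert)"
  using linear_0[OF imult_linear] .
lemma imult_minus: "imult (- x) = - imult (x::'a::chilbert)"
  using linear_neg[OF imult_linear] .
lemma imult_diff: "imult (x - y) = imult x - imult (y::'a::chilbert)"
  using linear_diff[OF imult_linear] .

lemma inner_imult_left: "inner (imult x) y = - inner x (imult (y::'a::chilbert))"
proof -
  have "inner (imult x) y = inner (imult (imult x)) (imult y)" by (simp add: imult_inner)
  also have "\<dots> = - inner x (imult y)" by (simp add: imult_imult)
  finally show ?thesis .
qed

lemma inner_imult_self1[simp]: "inner x (imult x) = (0::real)" for x :: "'a::chilbert"
proof -
  have "inner x (imult x) = inner (imult x) x" by (simp add: inner_commute)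
  also have "\<dots> = - inner x (imult x)" by (rule inner_imult_left)
  finally show ?thesis by simp
qed

lemma inner_imult_self2[simp]: "inner (imult x) x = (0::real)" for x :: "'a::chilbert"
  by (simp add: inner_commute)

lemma cscale_of_real[simp]: "cscale (complex_of_real r) x = r *\<^sub>R x"
  by (simp add: cscale_def)

section \<open>Hermitian operators\<close>

definition herm :: "('a::chilbert \<Rightarrow> 'a) \<Rightarrow> bool" where
  "herm T \<longleftrightarrow> T \<in> bop \<and> (\<forall>x y. inner (T x) y = inner x (T y))"

lemma bopD: "T \<in> bop \<Longrightarrow> bounded_linear T" "T \<in> bop \<Longrightarrow> T (imult x) = imult (T x)"
  by (auto simp: bop_def)

lemma bopI: "bounded_linear T \<Longrightarrow> (\<And>x. T (imult x) = imult (T x)) \<Longrightarrow> T \<in> bop"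
  by (auto simp: bop_def)

lemma bop_id[simp]: "id \<in> bop" "(\<lambda>x. x) \<in> bop"
  by (auto simp: bop_def bounded_linear_ident id_def)

lemma bop_comp: "S \<in> bop \<Longrightarrow> T \<in> bop \<Longrightarrow> S \<circ> T \<in> bop"
  by (auto simp: bop_def comp_def intro: bounded_linear_compose)

lemma bop_comp': "S \<in> bop \<Longrightarrow> T \<in> bop \<Longrightarrow> (\<lambda>x. S (T x)) \<in> bop"
  using bop_comp[of S T] by (simp add: comp_def)

lemma bop_add: "S \<in> bop \<Longrightarrow> T \<in> bop \<Longrightarrow> (\<lambda>x. S x + T x) \<in> bop"
  by (auto simp: bop_def imult_add intro: bounded_linear_add)

lemma bop_diff: "S \<in> bop \<Longrightarrow> T \<in> bop \<Longrightarrow> (\<lambda>x. S x - T x) \<in> bop"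
  by (auto simp: bop_def imult_diff intro: bounded_linear_sub)

lemma bop_scale: "T \<in> bop \<Longrightarrow> (\<lambda>x. r *\<^sub>R T x) \<in> bop"
  by (auto simp: bop_def imult_scaleR intro: bounded_linear_const_scaleR)

lemma bop_scaleI: "(\<lambda>x. r *\<^sub>R x) \<in> bop"
  using bop_scale[OF bop_id(2)] .

lemma bop_linear: assumes "T \<in> bop"
  shows "T (x + y) = T x + T y" "T (x - y) = T x - T y" "T (r *\<^sub>R x) = r *\<^sub>R T x"
    "T 0 = 0" "T (- x) = - T x"
proof -
  interpret bounded_linear T using bopD(1)[OF assms] .
  show "T (x + y) = T x + T y" "T (x - y) = T x - T y" "T (r *\<^sub>R x) = r *\<^sub>R T x"
    "T 0 = 0" by (simp_all add: add diff scaleR zero)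
  have "T (0 - x) = T 0 - T x" by (rule diff)
  thus "T (- x) = - T x" by (simp add: zero)
qed

lemma bop_bound: assumes "T \<in> bop" shows "\<exists>K>0. \<forall>x. norm (T x) \<le> norm x * K"
  using bounded_linear.pos_bounded[OF bopD(1)[OF assms]] .

lemma inner_bound: assumes "T \<in> bop" shows "\<exists>K>0. \<forall>x. \<bar>inner (T x) x\<bar> \<le> K * (norm x)\<^sup>2"
proof -
  obtain K where K: "K > 0" "\<And>x. norm (T x) \<le> norm x * K" using bop_bound[OF assms] by blast
  have "\<bar>inner (T x) x\<bar> \<le> K * (norm x)\<^sup>2" for x
  proof -
    have "\<bar>inner (T x) x\<bar> \<le> norm (T x) * norm x" by (rule Cauchy_Schwarz_ineq2)
    also have "\<dots> \<le> norm x * K * norm x" by (intro mult_right_mono K(2)) simp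
    finally show ?thesis by (simp add: power2_eq_square mult_ac)
  qed
  thus ?thesis using K(1) by blast
qed

lemma hermD: "herm T \<Longrightarrow> T \<in> bop" "herm T \<Longrightarrow> inner (T x) y = inner x (T y)"
  by (auto simp: herm_def)

lemma hermI: "T \<in> bop \<Longrightarrow> (\<And>x y. inner (T x) y = inner x (T y)) \<Longrightarrow> herm T"
  by (auto simp: herm_def)

lemma herm_id[simp]: "herm id" "herm (\<lambda>x. x)"
  by (simp_all add: herm_def)

lemma herm_add: assumes "herm S" "herm T" shows "herm (\<lambda>x. S x + T x)"
  by (rule hermI[OF bop_add[OF hermD(1)[OF assms(1)] hermD(1)[OF assms(2)]]])
    (simp add: inner_add_left inner_add_right hermD(2)[OF assms(1)] hermD(2)[OF assms(2)])

lemma herm_diff: assumes "herm S" "herm T" shows "herm (\<lambda>x. S x - T x)"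
  by (rule hermI[OF bop_diff[OF hermD(1)[OF assms(1)] hermD(1)[OF assms(2)]]])
    (simp add: inner_diff_left inner_diff_right hermD(2)[OF assms(1)] hermD(2)[OF assms(2)])

lemma herm_scale: assumes "herm T" shows "herm (\<lambda>x. r *\<^sub>R T x)"
  by (rule hermI[OF bop_scale[OF hermD(1)[OF assms(1)]]]) (simp add: hermD(2)[OF assms(1)])

lemma herm_scaleI: "herm (\<lambda>x. r *\<^sub>R x)"
  using herm_scale[OF herm_id(2)] .

lemma herm_cong: assumes "herm S" "herm T" shows "herm (\<lambda>x. S (T (S x)))"
  by (rule hermI[OF bop_comp'[OF hermD(1)[OF assms(1)] bop_comp'[OF hermD(1)[OF assms(2)] hermD(1)[OF assms(1)]]]])
    (simp add: hermD(2)[OF assms(1)] hermD(2)[OF assms(2)])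

lemma herm_commute: assumes "herm S" "herm T" "\<And>x. S (T x) = T (S x)" shows "herm (\<lambda>x. S (T x))"
proof (rule hermI[OF bop_comp'[OF hermD(1)[OF assms(1)] hermD(1)[OF assms(2)]]])
  fix x y
  have "inner (S (T x)) y = inner x (T (S y))" by (simp add: hermD(2)[OF assms(1)] hermD(2)[OF assms(2)])
  thus "inner (S (T x)) y = inner x (S (T y))" by (simp add: assms(3))
qed

lemma re_cinner: "Re (cinner x y) = inner x y" and im_cinner: "Im (cinner x y) = inner x (imult y)"
  by (simp_all add: cinner_def)

lemma pos_op_iff: "pos_op T \<longleftrightarrow> herm T \<and> (\<forall>x. 0 \<le> inner (T x) x)"
proof
  assume P: "pos_op T"
  hence bop: "T \<in> bop" and q: "\<And>x. inner (T x) (imult x) = 0" and p: "\<And>x. 0 \<le> inner (T x) x"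
    by (auto simp: pos_op_def re_cinner im_cinner)
  have sym: "inner (T x) y = inner x (T y)" for x y
  proof -
    have a: "inner (T x) (imult y) + inner (T y) (imult x) = 0" for x y
    proof -
      have "inner (T (x + y)) (imult (x + y)) = inner (T x) (imult x) + inner (T y) (imult y) +
         (inner (T x) (imult y) + inner (T y) (imult x))"
        by (simp add: bop_linear[OF bop] imult_add inner_add_left inner_add_right)
      thus ?thesis using q[of x] q[of y] q[of "x + y"] by linarith
    qed
    have "inner (T x) (imult (imult y)) + inner (T (imult y)) (imult x) = 0" by (rule a)
    hence "- inner (T x) y + inner (imult (T y)) (imult x) = 0"
      by (simp add: imult_imult bopD(2)[OF bop])
    hence "inner (T x) y = inner (T y) x" by (simp add: imult_inner)
    thus ?thesis by (simp add: inner_commute)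
  qed
  show "herm T \<and> (\<forall>x. 0 \<le> inner (T x) x)" using bop sym p by (auto intro: hermI)
next
  assume H: "herm T \<and> (\<forall>x. 0 \<le> inner (T x) x)"
  have "inner (T x) (imult x) = 0" for x
  proof -
    have "inner (T x) (imult x) = inner x (T (imult x))" using H by (simp add: hermD)
    also have "\<dots> = inner x (imult (T x))" using H by (simp add: bopD(2) hermD)
    also have "\<dots> = - inner (imult x) (T x)"
      using inner_imult_left[of x "T x"] by simp
    also have "\<dots> = - inner (T x) (imult x)" by (simp add: inner_commute)
    finally show ?thesis by simp
  qed
  thus "pos_op T" using H by (auto simp: pos_op_def re_cinner im_cinner hermD)
qed

lemma pos_op_herm: "pos_op T \<Longrightarrow> herm T" and pos_op_nonneg: "pos_op T \<Longrightarrow> 0 \<le> inner (T x) x"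
  by (auto simp: pos_op_iff)

lemma loewner_le_iff: "loewner_le S T \<longleftrightarrow> S \<in> bop \<and> T \<in> bop \<and> herm (\<lambda>x. T x - S x) \<and>
   (\<forall>x. inner (S x) x \<le> inner (T x) x)"
  by (auto simp: loewner_le_def pos_op_iff inner_diff_left)

lemma loewner_le_herm: "herm S \<Longrightarrow> herm T \<Longrightarrow> loewner_le S T \<longleftrightarrow> (\<forall>x. inner (S x) x \<le> inner (T x) x)"
  by (auto simp: loewner_le_iff hermD herm_diff)

section \<open>Norm bound from the numerical range\<close>

lemma norm_sq_add_diff: "(norm (x + y))\<^sup>2 + (norm (x - y))\<^sup>2 = 2 * (norm x)\<^sup>2 + 2 * (norm (y::'a::real_inner))\<^sup>2"
  by (simp add: power2_norm_eq_inner inner_add_left inner_add_right inner_diff_left inner_diff_right inner_commute)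

lemma herm_norm_bound:
  fixes S :: "'a::chilbert \<Rightarrow> 'a"
  assumes H: "herm S" and B: "\<And>x. \<bar>inner (S x) x\<bar> \<le> d * (norm x)\<^sup>2"
  shows "norm (S x) \<le> d * norm x"
proof (cases "S x = 0")
  case True
  show ?thesis
  proof (cases "x = 0")
    case True thus ?thesis by (simp add: bop_linear(4)[OF hermD(1)[OF H]])
  next
    case False
    have "0 \<le> d * (norm x)\<^sup>2" using B[of x] by linarith
    hence "0 \<le> d" using False by (simp add: zero_le_mult_iff)
    thus ?thesis using \<open>S x = 0\<close> by simp
  qed
next
  case False
  note bop = hermD(1)[OF H]
  have x0: "x \<noteq> 0" using False bop_linear(4)[OF bop] by auto
  define t where "t = norm x / norm (S x)"
  have t0: "t > 0" using False x0 by (simp add: t_def)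
  define y where "y = t *\<^sub>R S x"
  have ny: "norm y = norm x" using False by (simp add: y_def t_def)
  have sy: "inner (S y) x = inner (S x) y" using hermD(2)[OF H, of y x] by (simp add: inner_commute[of y "S x"])
  have e1: "inner (S (x + y)) (x + y) = inner (S x) x + inner (S x) y + inner (S y) x + inner (S y) y"
    by (simp add: bop_linear[OF bop] inner_add_left inner_add_right)
  have e2: "inner (S (x - y)) (x - y) = inner (S x) x - inner (S x) y - inner (S y) x + inner (S y) y"
    by (simp add: bop_linear[OF bop] inner_diff_left inner_diff_right)
  have "inner (S (x + y)) (x + y) - inner (S (x - y)) (x - y) = 4 * inner (S x) y"
    unfolding e1 e2 sy by simp
  also have "inner (S x) y = t * (norm (S x))\<^sup>2" by (simp add: y_def power2_norm_eq_inner)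
  finally have e: "inner (S (x + y)) (x + y) - inner (S (x - y)) (x - y) = 4 * (t * (norm (S x))\<^sup>2)" .
  have "inner (S (x + y)) (x + y) - inner (S (x - y)) (x - y) \<le> d * (norm (x + y))\<^sup>2 + d * (norm (x - y))\<^sup>2"
    using B[of "x + y"] B[of "x - y"] by linarith
  also have "\<dots> = d * ((norm (x + y))\<^sup>2 + (norm (x - y))\<^sup>2)" by (simp only: distrib_left)
  also have "\<dots> = d * (2 * (norm x)\<^sup>2 + 2 * (norm y)\<^sup>2)" by (simp only: norm_sq_add_diff)
  finally have "4 * (t * (norm (S x))\<^sup>2) \<le> 4 * (d * (norm x)\<^sup>2)" using e ny by simp
  hence "t * (norm (S x))\<^sup>2 \<le> d * (norm x)\<^sup>2" by simp
  moreover have "t * (norm (S x))\<^sup>2 = norm x * norm (S x)" using False by (simp add: t_def power2_eq_square)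
  ultimately have "norm x * norm (S x) \<le> d * (norm x)\<^sup>2" by linarith
  hence "norm x * norm (S x) \<le> norm x * (d * norm x)" by (simp add: power2_eq_square mult_ac)
  moreover have "norm x > 0" using x0 by simp
  ultimately show ?thesis by (rule mult_left_le_imp_le)
qed

lemma herm_sq_le:
  fixes P :: "'a::chilbert \<Rightarrow> 'a"
  assumes H: "herm P" and lo: "\<And>x. a * (norm x)\<^sup>2 \<le> inner (P x) x" and hi: "\<And>x. inner (P x) x \<le> b * (norm x)\<^sup>2"
  shows "(norm (P x))\<^sup>2 \<le> (a + b) * inner (P x) x - a * b * (norm x)\<^sup>2"
proof -
  let ?Q = "\<lambda>x. 2 *\<^sub>R P x - (a + b) *\<^sub>R x"
  have HQ: "herm ?Q" by (intro herm_diff herm_scale H herm_scaleI)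
  have iq: "inner (?Q x) x = 2 * inner (P x) x - (a + b) * (norm x)\<^sup>2" for x
    by (simp add: inner_diff_left power2_norm_eq_inner)
  have "\<bar>inner (?Q x) x\<bar> \<le> (b - a) * (norm x)\<^sup>2" for x
    unfolding iq using lo[of x] hi[of x] by (simp add: abs_le_iff algebra_simps)
  hence "norm (?Q x) \<le> (b - a) * norm x" by (rule herm_norm_bound[OF HQ])
  moreover have "0 \<le> norm (?Q x)" by simp
  ultimately have "(norm (?Q x))\<^sup>2 \<le> ((b - a) * norm x)\<^sup>2" by (rule power_mono)
  moreover have "(norm (?Q x))\<^sup>2 = 4 * (norm (P x))\<^sup>2 - 4 * ((a + b) * inner (P x) x) + (a + b)\<^sup>2 * (norm x)\<^sup>2"
    by (simp only: power2_norm_eq_inner)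
      (simp add: inner_diff_left inner_diff_right inner_commute[of x "P x"] power2_eq_square algebra_simps)
  moreover have "(a + b)\<^sup>2 * (norm x)\<^sup>2 - ((b - a) * norm x)\<^sup>2 = 4 * (a * b * (norm x)\<^sup>2)"
    by (simp add: power2_eq_square algebra_simps)
  ultimately show ?thesis by linarith
qed

lemma pos_sq_le:
  fixes P :: "'a::chilbert \<Rightarrow> 'a"
  assumes "pos_op P" shows "\<exists>b>0. \<forall>x. (norm (P x))\<^sup>2 \<le> b * inner (P x) x"
proof -
  obtain K where K: "K > 0" "\<And>x. \<bar>inner (P x) x\<bar> \<le> K * (norm x)\<^sup>2"
    using inner_bound[OF pos_op_herm[OF assms, THEN hermD(1)]] by blast
  have "(norm (P x))\<^sup>2 \<le> (0 + K) * inner (P x) x - 0 * K * (norm x)\<^sup>2" for x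
    by (rule herm_sq_le[OF pos_op_herm[OF assms]]) (use K(2) pos_op_nonneg[OF assms] in \<open>auto simp: abs_le_iff\<close>)
  thus ?thesis using K(1) by auto
qed

lemma pos_zero: assumes "pos_op P" "inner (P u) u = 0" shows "P u = 0"
proof -
  obtain b where "b > 0" "(norm (P u))\<^sup>2 \<le> b * inner (P u) u" using pos_sq_le[OF assms(1)] by blast
  thus ?thesis using assms(2) by simp
qed


lemma herm_below:
  fixes T :: "'a::chilbert \<Rightarrow> 'a"
  assumes H: "herm T" and m: "0 < m" and lo: "\<And>x. m * (norm x)\<^sup>2 \<le> inner (T x) x"
  shows "m * norm x \<le> norm (T x)"
proof (cases "x = 0")
  case True thus ?thesis by (simp add: bop_linear(4)[OF hermD(1)[OF H]])
next
  case False
  have "m * (norm x)\<^sup>2 \<le> norm (T x) * norm x"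
    using lo[of x] Cauchy_Schwarz_ineq2[of "T x" x] by linarith
  hence "norm x * (m * norm x) \<le> norm x * norm (T x)" by (simp add: power2_eq_square mult_ac)
  thus ?thesis using False by simp
qed

lemma funpow_bound:
  fixes S :: "'a::real_normed_vector \<Rightarrow> 'a"
  assumes "\<And>x. norm (S x) \<le> q * norm x" "0 \<le> q"
  shows "norm ((S ^^ n) y) \<le> q ^ n * norm y"
proof (induction n)
  case 0 thus ?case by (simp add: funpow_0)
next
  case (Suc n)
  have "norm ((S ^^ Suc n) y) = norm (S ((S ^^ n) y))" by simp
  also have "\<dots> \<le> q * norm ((S ^^ n) y)" by (rule assms(1))
  also have "\<dots> \<le> q * (q ^ n * norm y)" by (intro mult_left_mono Suc assms(2))
  finally show ?case by (simp add: mult_ac)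
qed

lemma herm_surj:
  fixes T :: "'a::chilbert \<Rightarrow> 'a"
  assumes H: "herm T" and m: "0 < m" and lo: "\<And>x. m * (norm x)\<^sup>2 \<le> inner (T x) x"
  shows "surj T"
proof -
  note bop = hermD(1)[OF H]
  obtain K where K: "K > 0" "\<And>x. \<bar>inner (T x) x\<bar> \<le> K * (norm x)\<^sup>2"
    using inner_bound[OF bop] by blast
  define b where "b = K + m"
  have b0: "b > 0" and mb: "m < b" using K m by (auto simp: b_def)
  define S where "S = (\<lambda>x. x - (1 / b) *\<^sub>R T x)"
  have HS: "herm S" unfolding S_def by (intro herm_diff herm_id herm_scale H)
  define q where "q = 1 - m / b"
  have q0: "0 \<le> q" and q1: "q < 1" using b0 mb m by (auto simp: q_def field_simps)
  have iS: "inner (S x) x = (norm x)\<^sup>2 - inner (T x) x / b" for x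
    by (simp add: S_def inner_diff_left power2_norm_eq_inner)
  have "\<bar>inner (S x) x\<bar> \<le> q * (norm x)\<^sup>2" for x
  proof -
    have a1: "inner (T x) x \<le> b * (norm x)\<^sup>2" using K(2)[of x] m
      by (simp add: b_def abs_le_iff algebra_simps) (smt (verit) zero_le_power2 mult_nonneg_nonneg less_imp_le m)
    have a2: "m * (norm x)\<^sup>2 \<le> inner (T x) x" by (rule lo)
    have "0 \<le> inner (S x) x" unfolding iS using a1 b0 by (simp add: field_simps)
    moreover have "inner (S x) x \<le> q * (norm x)\<^sup>2" unfolding iS q_def using a2 b0
      by (simp add: field_simps)
    ultimately show ?thesis by simp
  qed
  hence nS: "norm (S x) \<le> q * norm x" for x by (rule herm_norm_bound[OF HS])
  note bS = bopD(1)[OF hermD(1)[OF HS]]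
  show ?thesis
  proof (rule surjI)
    fix y
    let ?f = "\<lambda>n. (S ^^ n) y"
    have sm: "summable ?f"
    proof (rule summable_comparison_test)
      show "\<exists>N. \<forall>n\<ge>N. norm (?f n) \<le> norm y * q ^ n"
        using funpow_bound[OF nS q0] by (auto simp: mult_ac)
      show "summable (\<lambda>n. norm y * q ^ n)"
        by (intro summable_mult summable_geometric) (use q0 q1 in auto)
    qed
    define z where "z = suminf ?f"
    have "S z = (\<Sum>n. S (?f n))" unfolding z_def by (rule bounded_linear.suminf[OF bS sm])
    also have "\<dots> = (\<Sum>n. ?f (Suc n))" by simp
    also have "\<dots> = z - y" unfolding z_def using suminf_split_head[OF sm] by simp
    finally have "S z = z - y" .
    hence "(1 / b) *\<^sub>R T z = y" by (simp add: S_def)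
    thus "T ((1 / b) *\<^sub>R z) = y" by (simp add: bop_linear[OF bop])
  qed
qed

lemma herm_inv:
  fixes T :: "'a::chilbert \<Rightarrow> 'a"
  assumes H: "herm T" and m: "0 < m" and lo: "\<And>x. m * (norm x)\<^sup>2 \<le> inner (T x) x"
  shows "bij T" "herm (inv T)" "\<And>y. T (inv T y) = y" "\<And>x. inv T (T x) = x"
    "\<And>y. m * norm (inv T y) \<le> norm y" "\<And>y. 0 \<le> inner (inv T y) y"
    "\<And>y. m * (norm (inv T y))\<^sup>2 \<le> inner (inv T y) y"
proof -
  note bop = hermD(1)[OF H]
  note bl = bop_linear[OF bop]
  have below: "m * norm x \<le> norm (T x)" for x by (rule herm_below[OF H m lo])
  have inj: "inj T"
  proof (rule injI)
    fix x x' assume "T x = T x'"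
    hence "T (x - x') = 0" by (simp add: bl)
    hence "m * norm (x - x') \<le> 0" using below[of "x - x'"] by simp
    thus "x = x'" using m by (simp add: mult_le_0_iff)
  qed
  have surj: "surj T" by (rule herm_surj[OF H m lo])
  show bij: "bij T" using inj surj by (simp add: bij_def)
  show TI: "\<And>y. T (inv T y) = y" using surj by (simp add: surj_f_inv_f)
  show IT: "\<And>x. inv T (T x) = x" using inj by (simp add: inv_f_f)
  let ?g = "inv T"
  have eqI: "\<And>u v. T u = T v \<Longrightarrow> u = v" using inj by (simp add: inj_def)
  have gadd: "?g (x + y) = ?g x + ?g y" for x y by (rule eqI) (simp add: bl TI)
  have gscale: "?g (r *\<^sub>R x) = r *\<^sub>R ?g x" for r x by (rule eqI) (simp add: bl TI)
  show gb: "\<And>y. m * norm (?g y) \<le> norm y" using below[of "?g y" for y] by (simp add: TI)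
  have "norm (?g y) \<le> norm y * (1 / m)" for y using gb[of y] m by (simp add: field_simps)
  hence blg: "bounded_linear ?g" by (intro bounded_linear_intro[OF gadd gscale])
  have gJ: "?g (imult y) = imult (?g y)" for y
    by (rule eqI) (simp add: TI bopD(2)[OF bop])
  have "?g \<in> bop" by (rule bopI[OF blg gJ])
  moreover have "inner (?g x) y = inner x (?g y)" for x y
  proof -
    have "inner (?g x) y = inner (?g x) (T (?g y))" by (simp add: TI)
    also have "\<dots> = inner (T (?g x)) (?g y)" by (simp add: hermD(2)[OF H])
    also have "\<dots> = inner x (?g y)" by (simp add: TI)
    finally show ?thesis .
  qed
  ultimately show "herm ?g" by (rule hermI)
  show lo2: "\<And>y. m * (norm (?g y))\<^sup>2 \<le> inner (?g y) y"
  proof -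
    fix y
    have "inner (?g y) y = inner (T (?g y)) (?g y)" by (simp add: TI inner_commute)
    thus "m * (norm (?g y))\<^sup>2 \<le> inner (?g y) y" using lo[of "?g y"] by simp
  qed
  show "\<And>y. 0 \<le> inner (?g y) y" using lo2 m
    by (meson mult_nonneg_nonneg order_trans less_imp_le zero_le_power2)
qed

lemma herm_inv_bounds:
  fixes T :: "'a::chilbert \<Rightarrow> 'a"
  assumes H: "herm T" and m: "0 < m" and M: "0 < M" and lo: "\<And>x. m * (norm x)\<^sup>2 \<le> inner (T x) x"
    and hi: "\<And>x. inner (T x) x \<le> M * (norm x)\<^sup>2"
  shows "(1 / M) * (norm y)\<^sup>2 \<le> inner (inv T y) y" "inner (inv T y) y \<le> (1 / m) * (norm y)\<^sup>2"
proof -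
  note I = herm_inv[OF H m lo]
  define u where "u = inv T y"
  have y: "y = T u" by (simp add: u_def I(3))
  have nn: "0 \<le> inner (T x) x" for x using lo[of x] m
    by (meson mult_nonneg_nonneg order_trans less_imp_le zero_le_power2)
  have iu: "inner (inv T y) y = inner (T u) u" by (simp add: u_def I(3) inner_commute)
  have "(norm (T u))\<^sup>2 \<le> (0 + M) * inner (T u) u - 0 * M * (norm u)\<^sup>2"
    by (rule herm_sq_le[OF H]) (use nn hi in auto)
  hence "(norm y)\<^sup>2 \<le> M * inner (inv T y) y" unfolding iu by (simp add: y[symmetric])
  thus "(1 / M) * (norm y)\<^sup>2 \<le> inner (inv T y) y" using M by (simp add: field_simps)
  have "inner (T u) u \<le> norm (T u) * norm u" using Cauchy_Schwarz_ineq2[of "T u" u] by linarith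
  also have "\<dots> \<le> norm y * (norm y / m)"
    using I(5)[of y] m by (intro mult_mono) (auto simp: y[symmetric] u_def field_simps I(3))
  finally show "inner (inv T y) y \<le> (1 / m) * (norm y)\<^sup>2" by (simp add: iu power2_eq_square)
qed


lemma bl_scaleR: "bounded_linear P \<Longrightarrow> P (r *\<^sub>R x) = r *\<^sub>R P x"
proof -
  assume "bounded_linear P"
  then interpret bounded_linear P .
  show ?thesis by (rule scaleR)
qed

lemma bl_diff: "bounded_linear P \<Longrightarrow> P (x - y) = P x - P y"
proof -
  assume "bounded_linear P"
  then interpret bounded_linear P .
  show ?thesis by (rule diff)
qed

lemma bl_add: "bounded_linear P \<Longrightarrow> P (x + y) = P x + P y"
proof -
  assume "bounded_linear P"
  then interpret bounded_linear P .
  show ?thesis by (rule add)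
qed

lemma funpow_commute:
  assumes "\<And>x. P (S x) = S (P x)" shows "P ((S ^^ n) x) = (S ^^ n) (P x)"
  by (induction n arbitrary: x) (simp_all add: assms)

lemma funpow_herm:
  fixes S :: "'a::chilbert \<Rightarrow> 'a"
  assumes "herm S" shows "inner ((S ^^ n) x) y = inner x ((S ^^ n) y)"
proof (induction n arbitrary: x y)
  case 0 thus ?case by simp
next
  case (Suc n)
  have "inner ((S ^^ Suc n) x) y = inner (S ((S ^^ n) x)) y" by simp
  also have "\<dots> = inner ((S ^^ n) x) (S y)" by (rule hermD(2)[OF assms])
  also have "\<dots> = inner x ((S ^^ n) (S y))" by (rule Suc)
  also have "(S ^^ n) (S y) = (S ^^ Suc n) y" by (simp add: funpow_swap1)
  finally show ?case .
qed

lemma sqrt_exists: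
  fixes T :: "'a::chilbert \<Rightarrow> 'a"
  assumes PT: "pos_op T"
  shows "\<exists>R. pos_op R \<and> R \<circ> R = T \<and>
     (\<forall>P. bounded_linear P \<longrightarrow> (\<forall>x. P (T x) = T (P x)) \<longrightarrow> (\<forall>x. P (R x) = R (P x)))"
proof -
  note H = pos_op_herm[OF PT]
  note bop = hermD(1)[OF H]
  obtain K where K: "K > 0" "\<And>x. \<bar>inner (T x) x\<bar> \<le> K * (norm x)\<^sup>2"
    using inner_bound[OF bop] by blast
  define S where "S = (\<lambda>x. x - (1 / K) *\<^sub>R T x)"
  have HS: "herm S" unfolding S_def by (intro herm_diff herm_id herm_scale H)
  have iS: "inner (S x) x = (norm x)\<^sup>2 - inner (T x) x / K" for x
    by (simp add: S_def inner_diff_left power2_norm_eq_inner)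
  have iSb: "\<bar>inner (S x) x\<bar> \<le> 1 * (norm x)\<^sup>2" for x
  proof -
    have a1: "inner (T x) x \<le> K * (norm x)\<^sup>2" using K(2)[of x] by (simp add: abs_le_iff)
    have a2: "0 \<le> inner (T x) x" by (rule pos_op_nonneg[OF PT])
    have "0 \<le> inner (S x) x" unfolding iS using a1 K(1) by (simp add: field_simps)
    moreover have "inner (S x) x \<le> (norm x)\<^sup>2" unfolding iS using a2 K(1) by simp
    ultimately show ?thesis by simp
  qed
  have nS: "norm (S x) \<le> 1 * norm x" for x by (rule herm_norm_bound[OF HS iSb])
  note bS = bopD(1)[OF hermD(1)[OF HS]]
  have nSn: "norm ((S ^^ n) x) \<le> norm x" for n x
    using funpow_bound[of S 1 n x] nS by simp
  define SL where "SL = Blinfun S"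
  have SLa: "blinfun_apply SL = S" unfolding SL_def by (rule bounded_linear_Blinfun_apply[OF bS])
  define pw where "pw n = ((\<lambda>L. SL o\<^sub>L L) ^^ n) id_blinfun" for n
  have pwa: "blinfun_apply (pw n) x = (S ^^ n) x" for n x
    by (induction n arbitrary: x) (simp_all add: pw_def SLa)
  have npw: "norm (pw n) \<le> 1" for n
    by (rule norm_blinfun_bound) (use nSn in \<open>simp_all add: pwa\<close>)
  have pwc: "pw i o\<^sub>L pw j = pw (i + j)" for i j
    by (rule blinfun_eqI) (simp add: pwa funpow_add)
  let ?a = "\<lambda>n. ca n *\<^sub>R pw n"
  have sa: "summable (\<lambda>n. norm (?a n))"
  proof (rule summable_comparison_test[OF _ ca_summable])
    show "\<exists>N. \<forall>n\<ge>N. norm (norm (?a n)) \<le> \<bar>ca n\<bar>"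
    proof (intro exI[of _ 0] allI impI)
      fix n :: nat
      have "\<bar>ca n\<bar> * norm (pw n) \<le> \<bar>ca n\<bar>" by (rule mult_left_le[OF npw]) simp
      thus "norm (norm (?a n)) \<le> \<bar>ca n\<bar>" by simp
    qed
  qed
  define RL where "RL = (\<Sum>n. ?a n)"
  have "(\<lambda>k. \<Sum>i\<le>k. ?a i o\<^sub>L ?a (k - i)) sums (RL o\<^sub>L RL)"
    unfolding RL_def by (rule Cauchy_product_sums_compose[OF sa sa])
  moreover have "(\<Sum>i\<le>k. ?a i o\<^sub>L ?a (k - i)) = (if k = 0 then 1 else if k = 1 then -1 else 0) *\<^sub>R pw k" for k
  proof -
    have "(\<Sum>i\<le>k. ?a i o\<^sub>L ?a (k - i)) = (\<Sum>i\<le>k. (ca i * ca (k - i)) *\<^sub>R pw k)"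
    proof (rule sum.cong[OF refl])
      fix i assume "i \<in> {..k}"
      hence "pw i o\<^sub>L pw (k - i) = pw k" by (simp add: pwc)
      thus "?a i o\<^sub>L ?a (k - i) = (ca i * ca (k - i)) *\<^sub>R pw k"
        by (simp add: bounded_bilinear.scaleR_left[OF bounded_bilinear_blinfun_compose]
          bounded_bilinear.scaleR_right[OF bounded_bilinear_blinfun_compose])
    qed
    also have "\<dots> = (\<Sum>i\<le>k. ca i * ca (k - i)) *\<^sub>R pw k" by (simp add: scaleR_sum_left)
    finally show ?thesis by (simp only: ca_cauchy)
  qed
  ultimately have "(\<lambda>k. (if k = 0 then 1 else if k = 1 then -1 else 0) *\<^sub>R pw k) sums (RL o\<^sub>L RL)"
    by simp
  hence RLsq: "RL o\<^sub>L RL = (\<Sum>k. (if k = 0 then 1 else if k = 1 then -1 else 0) *\<^sub>R pw k)"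
    by (simp add: sums_iff)
  also have "\<dots> = (\<Sum>k\<in>{0,1}. (if k = 0 then 1 else if k = 1 then -1 else 0) *\<^sub>R pw k)"
    by (rule suminf_finite) auto
  also have "\<dots> = pw 0 - pw 1" by simp
  finally have RLsq: "RL o\<^sub>L RL = pw 0 - pw 1" .
  define R0 where "R0 = blinfun_apply RL"
  have R0sq: "R0 (R0 x) = x - S x" for x
  proof -
    have "R0 (R0 x) = blinfun_apply (RL o\<^sub>L RL) x" by (simp add: R0_def)
    also have "\<dots> = x - S x" unfolding RLsq by (simp add: blinfun.diff_left pwa)
    finally show ?thesis .
  qed
  have sx: "summable (\<lambda>n. blinfun_apply (?a n) x)" for x
    by (rule bounded_linear.summable[OF bounded_linear_apply_blinfun summable_norm_cancel[OF sa]])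
  have R0x: "R0 x = (\<Sum>n. ca n *\<^sub>R (S ^^ n) x)" for x
  proof -
    have "R0 x = (\<Sum>n. blinfun_apply (?a n) x)" unfolding R0_def RL_def
      by (rule bounded_linear.suminf[OF bounded_linear_apply_blinfun summable_norm_cancel[OF sa]])
    thus ?thesis by (simp add: pwa blinfun.scaleR_left)
  qed
  have sx': "summable (\<lambda>n. ca n *\<^sub>R (S ^^ n) x)" for x using sx[of x] by (simp add: pwa blinfun.scaleR_left)
  have blR0: "bounded_linear R0" unfolding R0_def by (rule blinfun.bounded_linear_right)
  have R0comm: "P (R0 x) = R0 (P x)" if P: "bounded_linear P" "\<And>x. P (S x) = S (P x)" for P x
  proof -
    have "P (R0 x) = (\<Sum>n. P (ca n *\<^sub>R (S ^^ n) x))" unfolding R0x by (rule bounded_linear.suminf[OF P(1) sx'])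
    also have "\<dots> = (\<Sum>n. ca n *\<^sub>R (S ^^ n) (P x))"
      using funpow_commute[of P S, OF P(2)] by (simp add: bl_scaleR[OF P(1)])
    finally show ?thesis by (simp add: R0x)
  qed
  have R0J: "R0 (imult x) = imult (R0 x)" for x
    by (rule R0comm[OF bl_imult, symmetric]) (simp add: bopD(2)[OF hermD(1)[OF HS]])
  have R0bop: "R0 \<in> bop" by (rule bopI[OF blR0 R0J])
  have R0herm: "inner (R0 x) y = inner x (R0 y)" for x y
  proof -
    have "inner (R0 x) y = (\<Sum>n. inner (ca n *\<^sub>R (S ^^ n) x) y)" unfolding R0x
      by (rule bounded_linear.suminf[OF bounded_linear_inner_left sx'])
    also have "\<dots> = (\<Sum>n. inner x (ca n *\<^sub>R (S ^^ n) y))" by (simp add: funpow_herm[OF HS])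
    also have "\<dots> = inner x (R0 y)" unfolding R0x
      by (rule bounded_linear.suminf[OF bounded_linear_inner_right sx', symmetric])
    finally show ?thesis .
  qed
  have R0pos: "0 \<le> inner (R0 x) x" for x
  proof -
    let ?t = "\<lambda>n. ca n * inner ((S ^^ n) x) x"
    let ?g = "\<lambda>n. (if n = 0 then 2 * (norm x)\<^sup>2 else 0) - \<bar>ca n\<bar> * (norm x)\<^sup>2"
    have ir: "inner (R0 x) x = (\<Sum>n. inner (ca n *\<^sub>R (S ^^ n) x) x)" unfolding R0x
      by (rule bounded_linear.suminf[OF bounded_linear_inner_left sx'])
    have st: "summable (\<lambda>n. inner (ca n *\<^sub>R (S ^^ n) x) x)"
      by (rule bounded_linear.summable[OF bounded_linear_inner_left sx'])
    have s1: "summable (\<lambda>n. if n = 0 then 2 * (norm x)\<^sup>2 else (0::real))"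
      using sums_single[of 0 "\<lambda>_. 2 * (norm x)\<^sup>2"] by (simp add: sums_iff)
    have s2: "summable (\<lambda>n. \<bar>ca n\<bar> * (norm x)\<^sup>2)" by (rule summable_mult2[OF ca_summable])
    have sg: "summable ?g" by (rule summable_diff[OF s1 s2])
    have le: "?g n \<le> inner (ca n *\<^sub>R (S ^^ n) x) x" for n
    proof (cases "n = 0")
      case True thus ?thesis by (simp add: power2_norm_eq_inner)
    next
      case False
      have "\<bar>inner ((S ^^ n) x) x\<bar> \<le> norm ((S ^^ n) x) * norm x" by (rule Cauchy_Schwarz_ineq2)
      also have "\<dots> \<le> norm x * norm x" by (intro mult_right_mono nSn) simp
      finally have "\<bar>inner ((S ^^ n) x) x\<bar> \<le> (norm x)\<^sup>2" by (simp add: power2_eq_square)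
      hence "\<bar>ca n\<bar> * \<bar>inner ((S ^^ n) x) x\<bar> \<le> \<bar>ca n\<bar> * (norm x)\<^sup>2" by (intro mult_left_mono) auto
      moreover have "- (\<bar>ca n\<bar> * \<bar>inner ((S ^^ n) x) x\<bar>) \<le> ca n * inner ((S ^^ n) x) x"
        by (simp add: abs_mult[symmetric])
      ultimately show ?thesis using False by simp
    qed
    have "suminf ?g \<le> inner (R0 x) x" unfolding ir by (rule suminf_le[OF le sg st])
    moreover have "suminf ?g = 2 * (norm x)\<^sup>2 - (\<Sum>n. \<bar>ca n\<bar>) * (norm x)\<^sup>2"
    proof -
      have "suminf ?g = (\<Sum>n. if n = 0 then 2 * (norm x)\<^sup>2 else (0::real)) - (\<Sum>n. \<bar>ca n\<bar> * (norm x)\<^sup>2)"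
        by (rule suminf_diff[OF s1 s2, symmetric])
      also have "(\<Sum>n. if n = 0 then 2 * (norm x)\<^sup>2 else (0::real)) = 2 * (norm x)\<^sup>2"
        using sums_single[of 0 "\<lambda>_. 2 * (norm x)\<^sup>2"] by (simp add: sums_iff)
      also have "(\<Sum>n. \<bar>ca n\<bar> * (norm x)\<^sup>2) = (\<Sum>n. \<bar>ca n\<bar>) * (norm x)\<^sup>2"
        by (rule suminf_mult2[OF ca_summable, symmetric])
      finally show ?thesis .
    qed
    moreover have "(\<Sum>n. \<bar>ca n\<bar>) * (norm x)\<^sup>2 \<le> 2 * (norm x)\<^sup>2"
      by (intro mult_right_mono ca_suminf_le) simp
    ultimately show ?thesis by linarith
  qed
  define R where "R = (\<lambda>x. sqrt K *\<^sub>R R0 x)"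
  have Rherm: "herm R" unfolding R_def by (intro herm_scale hermI[OF R0bop R0herm])
  have "pos_op R" unfolding pos_op_iff
    using Rherm R0pos K(1) by (simp add: R_def)
  moreover have "R \<circ> R = T"
  proof
    fix x
    have "(R \<circ> R) x = K *\<^sub>R R0 (R0 x)"
      using K(1) by (simp add: R_def bl_scaleR[OF blR0])
    also have "\<dots> = T x" using K(1) by (simp add: R0sq S_def)
    finally show "(R \<circ> R) x = T x" .
  qed
  moreover have "\<forall>P. bounded_linear P \<longrightarrow> (\<forall>x. P (T x) = T (P x)) \<longrightarrow> (\<forall>x. P (R x) = R (P x))"
  proof (intro allI impI)
    fix P x assume P: "bounded_linear P" "\<forall>x. P (T x) = T (P x)"
    have "P (S x) = S (P x)" for x
      using P by (simp add: S_def bl_diff[OF P(1)] bl_scaleR[OF P(1)])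
    hence "P (R0 x) = R0 (P x)" by (rule R0comm[OF P(1)])
    thus "P (R x) = R (P x)" by (simp add: R_def bl_scaleR[OF P(1)])
  qed
  ultimately show ?thesis by blast
qed


lemma sqrt_unique:
  fixes R R' T :: "'a::chilbert \<Rightarrow> 'a"
  assumes PR: "pos_op R" and RR: "R \<circ> R = T"
    and comm: "\<forall>P. bounded_linear P \<longrightarrow> (\<forall>x. P (T x) = T (P x)) \<longrightarrow> (\<forall>x. P (R x) = R (P x))"
    and PR': "pos_op R'" and RR': "R' \<circ> R' = T"
  shows "R' = R"
proof
  fix y
  note HR = pos_op_herm[OF PR] and HR' = pos_op_herm[OF PR']
  note bR = hermD(1)[OF HR] and bR' = hermD(1)[OF HR']
  have T1: "T x = R (R x)" for x using RR by (auto simp: fun_eq_iff)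
  have T2: "T x = R' (R' x)" for x using RR' by (auto simp: fun_eq_iff)
  have "\<forall>x. R' (T x) = T (R' x)" by (simp add: T2)
  hence RR'c: "R' (R x) = R (R' x)" for x using comm bopD(1)[OF bR'] by blast
  define X where "X = (\<lambda>x. R x - R' x)"
  have HX: "herm X" unfolding X_def by (rule herm_diff[OF HR HR'])
  define u where "u = X y"
  have "R u + R' u = 0"
    unfolding u_def X_def
    by (simp add: bop_linear[OF bR] bop_linear[OF bR'] RR'c T1[symmetric] T2[symmetric])
  hence "inner (R u) u + inner (R' u) u = 0" by (metis inner_add_left inner_zero_left)
  moreover have "0 \<le> inner (R u) u" "0 \<le> inner (R' u) u" by (simp_all add: pos_op_nonneg PR PR')
  ultimately have "inner (R u) u = 0" "inner (R' u) u = 0" by linarith+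
  hence "R u = 0" "R' u = 0" using pos_zero PR PR' by blast+
  hence "X u = 0" by (simp add: X_def)
  hence "inner (X y) (X y) = 0" using hermD(2)[OF HX, of y "X y"] by (simp add: u_def inner_commute)
  hence "X y = 0" by simp
  thus "R' y = R y" by (simp add: X_def)
qed

lemma op_sqrt:
  fixes T :: "'a::chilbert \<Rightarrow> 'a"
  assumes "pos_op T"
  shows "pos_op (op_sqrt T)" "\<And>x. op_sqrt T (op_sqrt T x) = T x"
    "\<And>P x. bounded_linear P \<Longrightarrow> (\<And>x. P (T x) = T (P x)) \<Longrightarrow> P (op_sqrt T x) = op_sqrt T (P x)"
proof -
  obtain R where R: "pos_op R" "R \<circ> R = T"
    "\<forall>P. bounded_linear P \<longrightarrow> (\<forall>x. P (T x) = T (P x)) \<longrightarrow> (\<forall>x. P (R x) = R (P x))"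
    using sqrt_exists[OF assms] by blast
  have eq: "op_sqrt T = R" unfolding op_sqrt_def
  proof (rule the_equality)
    show "pos_op R \<and> R \<circ> R = T" using R by simp
    show "\<And>S. pos_op S \<and> S \<circ> S = T \<Longrightarrow> S = R" using sqrt_unique[OF R(1,2,3)] by blast
  qed
  show "pos_op (op_sqrt T)" by (simp add: eq R(1))
  show "\<And>x. op_sqrt T (op_sqrt T x) = T x" using R(2) by (simp add: eq fun_eq_iff)
  show "\<And>P x. bounded_linear P \<Longrightarrow> (\<And>x. P (T x) = T (P x)) \<Longrightarrow> P (op_sqrt T x) = op_sqrt T (P x)"
    using R(3) by (simp add: eq)
qed

lemma pos_comm_prod:
  fixes P Q :: "'a::chilbert \<Rightarrow> 'a"
  assumes PP: "pos_op P" and PQ: "pos_op Q" and c: "\<And>x. P (Q x) = Q (P x)"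
  shows "0 \<le> inner (P (Q y)) y"
proof -
  let ?q = "op_sqrt Q"
  note S = op_sqrt[OF PQ]
  have bP: "bounded_linear P" using hermD(1)[OF pos_op_herm[OF PP]] by (rule bopD(1))
  have cq: "P (?q x) = ?q (P x)" for x by (rule S(3)[OF bP c])
  have "inner (P (Q y)) y = inner (?q (P (?q y))) y" by (simp add: S(2)[symmetric] cq)
  also have "\<dots> = inner (P (?q y)) (?q y)" by (rule hermD(2)[OF pos_op_herm[OF S(1)]])
  finally show ?thesis using pos_op_nonneg[OF PP] by simp
qed

lemma pos_cong:
  fixes P S :: "'a::chilbert \<Rightarrow> 'a"
  assumes "pos_op P" "herm S" shows "pos_op (\<lambda>x. S (P (S x)))"
  unfolding pos_op_iff
proof
  show "herm (\<lambda>x. S (P (S x)))" by (rule herm_cong[OF assms(2) pos_op_herm[OF assms(1)]])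
  show "\<forall>x. 0 \<le> inner (S (P (S x))) x"
    using hermD(2)[OF assms(2)] pos_op_nonneg[OF assms(1)] by simp
qed

lemma sqrt_mono:
  fixes r D :: "'a::chilbert \<Rightarrow> 'a"
  assumes Pr: "pos_op r" and HD: "herm D" and d0: "0 < \<delta>" and Dlo: "\<And>x. \<delta> * (norm x)\<^sup>2 \<le> inner (D x) x"
    and sq: "\<And>x. (norm (r x))\<^sup>2 \<le> (norm (D x))\<^sup>2"
  shows "inner (r x) x \<le> inner (D x) x"
proof (rule ccontr)
  assume "\<not> inner (r x) x \<le> inner (D x) x"
  note Hr = pos_op_herm[OF Pr]
  define H where "H = (\<lambda>x. D x - r x)"
  define Sp where "Sp = (\<lambda>x. D x + r x)"
  have HH: "herm H" unfolding H_def by (rule herm_diff[OF HD Hr])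
  have HS: "herm Sp" unfolding Sp_def by (rule herm_add[OF HD Hr])
  have neg: "inner (H x) x < 0" using \<open>\<not> _\<close> by (simp add: H_def inner_diff_left)
  have key: "0 \<le> inner (H z) (Sp z)" for z
  proof -
    have "inner (H z) (Sp z) = (norm (D z))\<^sup>2 - (norm (r z))\<^sup>2"
      by (simp add: H_def Sp_def inner_add_right inner_diff_left power2_norm_eq_inner inner_commute[of "r z" "D z"])
    thus ?thesis using sq[of z] by simp
  qed
  have Slo: "\<delta> * (norm z)\<^sup>2 \<le> inner z (Sp z)" for z
    using Dlo[of z] pos_op_nonneg[OF Pr, of z]
    by (simp add: Sp_def inner_add_right inner_commute[of z])
  obtain KH where KH: "KH > 0" "\<And>z. \<bar>inner (H z) z\<bar> \<le> KH * (norm z)\<^sup>2"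
    using inner_bound[OF hermD(1)[OF HH]] by blast
  obtain \<sigma> where sg: "\<sigma> > 0" "\<And>z. norm (Sp z) \<le> norm z * \<sigma>"
    using bop_bound[OF hermD(1)[OF HS]] by blast
  have bH: "bounded_linear H" by (rule bopD(1)[OF hermD(1)[OF HH]])
  have x0: "x \<noteq> 0" using neg by (auto simp: bl_scaleR[OF bH, of 0 0, simplified])
  define A where "A = {inner (H z) z | z. norm z = 1}"
  define e where "e = (1 / norm x) *\<^sub>R x"
  have ne: "norm e = 1" using x0 by (simp add: e_def)
  have He: "inner (H e) e = inner (H x) x / (norm x)\<^sup>2"
    by (simp add: e_def bl_scaleR[OF bH] power2_eq_square)
  have Ane: "A \<noteq> {}" using ne by (auto simp: A_def)
  have Abdd: "bdd_below A"
  proof (rule bdd_belowI)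
    fix a assume "a \<in> A"
    then obtain z where "norm z = 1" "a = inner (H z) z" by (auto simp: A_def)
    thus "- KH \<le> a" using KH(2)[of z] by (simp add: abs_le_iff)
  qed
  define \<mu> where "\<mu> = Inf A"
  have "\<mu> \<le> inner (H e) e" unfolding \<mu>_def by (rule cInf_lower[OF _ Abdd]) (use ne in \<open>auto simp: A_def\<close>)
  moreover have "inner (H e) e < 0" using neg x0 by (simp add: He divide_neg_pos)
  ultimately have mu0: "\<mu> < 0" by linarith
  have muz: "\<mu> * (norm z)\<^sup>2 \<le> inner (H z) z" for z
  proof (cases "z = 0")
    case True thus ?thesis by (simp add: bl_scaleR[OF bH, of 0 0, simplified])
  next
    case False
    define w where "w = (1 / norm z) *\<^sub>R z"
    have "norm w = 1" using False by (simp add: w_def)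
    hence "\<mu> \<le> inner (H w) w" unfolding \<mu>_def by (intro cInf_lower[OF _ Abdd]) (auto simp: A_def)
    also have "inner (H w) w = inner (H z) z / (norm z)\<^sup>2"
      by (simp add: w_def bl_scaleR[OF bH] power2_eq_square)
    finally show ?thesis using False by (simp add: field_simps)
  qed
  define P where "P = (\<lambda>z. H z - \<mu> *\<^sub>R z)"
  have HP: "herm P" unfolding P_def by (intro herm_diff HH herm_scaleI)
  have iP: "inner (P z) z = inner (H z) z - \<mu> * (norm z)\<^sup>2" for z
    by (simp add: P_def inner_diff_left power2_norm_eq_inner)
  define \<beta> where "\<beta> = KH - \<mu>"
  have b0: "\<beta> > 0" using KH(1) mu0 by (simp add: \<beta>_def)
  have Psq: "(norm (P z))\<^sup>2 \<le> \<beta> * inner (P z) z" for z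
  proof -
    have "(norm (P z))\<^sup>2 \<le> (0 + \<beta>) * inner (P z) z - 0 * \<beta> * (norm z)\<^sup>2"
    proof (rule herm_sq_le[OF HP])
      show "0 * (norm z)\<^sup>2 \<le> inner (P z) z" for z using muz[of z] by (simp add: iP)
      show "inner (P z) z \<le> \<beta> * (norm z)\<^sup>2" for z
        using KH(2)[of z] by (simp add: iP \<beta>_def abs_le_iff algebra_simps)
    qed
    thus ?thesis by simp
  qed
  define \<epsilon> where "\<epsilon> = (\<mu> * \<delta>)\<^sup>2 / (2 * \<beta> * \<sigma>\<^sup>2)"
  have eps0: "\<epsilon> > 0" using mu0 d0 b0 sg(1) by (simp add: \<epsilon>_def)
  have "\<mu> < \<mu> + \<epsilon>" using eps0 by simp
  then obtain a where "a \<in> A" "a < \<mu> + \<epsilon>" unfolding \<mu>_def using cInf_less_iff[OF Ane Abdd] by blast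
  then obtain z where z1: "norm z = 1" and zlt: "inner (H z) z < \<mu> + \<epsilon>" by (auto simp: A_def)
  have "inner (P z) z < \<epsilon>" using zlt z1 by (simp add: iP)
  hence Pz2: "(norm (P z))\<^sup>2 \<le> \<beta> * \<epsilon>" using Psq[of z] b0 by (smt (verit) mult_left_mono)
  have "0 \<le> inner (H z) (Sp z)" by (rule key)
  also have "H z = P z + \<mu> *\<^sub>R z" by (simp add: P_def)
  also have "inner (P z + \<mu> *\<^sub>R z) (Sp z) = inner (P z) (Sp z) + \<mu> * inner z (Sp z)"
    by (simp add: inner_add_left)
  finally have f1: "0 \<le> inner (P z) (Sp z) + \<mu> * inner z (Sp z)" .
  have "inner (P z) (Sp z) \<le> norm (P z) * norm (Sp z)" using Cauchy_Schwarz_ineq2[of "P z" "Sp z"] by linarith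
  also have "\<dots> \<le> norm (P z) * \<sigma>" using sg(2)[of z] z1 by (intro mult_left_mono) auto
  finally have f2: "inner (P z) (Sp z) \<le> norm (P z) * \<sigma>" .
  have "\<delta> \<le> inner z (Sp z)" using Slo[of z] z1 by simp
  hence f3: "\<mu> * inner z (Sp z) \<le> \<mu> * \<delta>" using mu0 by (simp add: mult_left_mono_neg)
  have c1: "- (\<mu> * \<delta>) \<le> norm (P z) * \<sigma>" using f1 f2 f3 by linarith
  have md: "0 < - (\<mu> * \<delta>)" using mu0 d0 by (simp add: mult_neg_pos)
  have "(\<mu> * \<delta>)\<^sup>2 = (- (\<mu> * \<delta>))\<^sup>2" by simp
  also have "\<dots> \<le> (norm (P z) * \<sigma>)\<^sup>2" using c1 md by (intro power_mono) auto
  also have "\<dots> = (norm (P z))\<^sup>2 * \<sigma>\<^sup>2" by (simp add: power_mult_distrib)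
  also have "\<dots> \<le> (\<beta> * \<epsilon>) * \<sigma>\<^sup>2" using Pz2 by (intro mult_right_mono) auto
  also have "\<dots> = (\<mu> * \<delta>)\<^sup>2 / 2" using b0 sg(1) by (simp add: \<epsilon>_def field_simps)
  finally have "(\<mu> * \<delta>)\<^sup>2 \<le> (\<mu> * \<delta>)\<^sup>2 / 2" .
  moreover have "(\<mu> * \<delta>)\<^sup>2 > 0" using mu0 d0 by simp
  ultimately show False by simp
qed


section \<open>Unital positive maps\<close>

context
  fixes \<Phi> :: "('a::chilbert \<Rightarrow> 'a) \<Rightarrow> ('b::chilbert \<Rightarrow> 'b)"
  assumes U: "unital_pos_map \<Phi>"
begin

lemma upm_bop: "T \<in> bop \<Longrightarrow> \<Phi> T \<in> bop"
  using U by (auto simp: unital_pos_map_def)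

lemma upm_add: "S \<in> bop \<Longrightarrow> T \<in> bop \<Longrightarrow> \<Phi> (\<lambda>x. S x + T x) = (\<lambda>y. \<Phi> S y + \<Phi> T y)"
  using U by (auto simp: unital_pos_map_def)

lemma upm_scale: "T \<in> bop \<Longrightarrow> \<Phi> (\<lambda>x. r *\<^sub>R T x) = (\<lambda>y. r *\<^sub>R \<Phi> T y)"
proof -
  assume T: "T \<in> bop"
  have "\<Phi> (\<lambda>x. cscale (complex_of_real r) (T x)) = (\<lambda>y. cscale (complex_of_real r) (\<Phi> T y))"
    using U T unfolding unital_pos_map_def by blast
  thus ?thesis by simp
qed

lemma upm_id: "\<Phi> (\<lambda>x. x) = (\<lambda>y. y)"
  using U by (auto simp: unital_pos_map_def id_def)

lemma upm_scaleI: "\<Phi> (\<lambda>x. r *\<^sub>R x) = (\<lambda>y. r *\<^sub>R y)"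
  using upm_scale[OF bop_id(2), of r] upm_id by simp

lemma upm_diff: "S \<in> bop \<Longrightarrow> T \<in> bop \<Longrightarrow> \<Phi> (\<lambda>x. S x - T x) = (\<lambda>y. \<Phi> S y - \<Phi> T y)"
proof -
  assume S: "S \<in> bop" and T: "T \<in> bop"
  have "\<Phi> (\<lambda>x. S x - T x) = \<Phi> (\<lambda>x. S x + (- 1) *\<^sub>R T x)" by (simp only: scaleR_minus1_left diff_conv_add_uminus)
  also have "\<dots> = (\<lambda>y. \<Phi> S y + \<Phi> (\<lambda>x. (- 1) *\<^sub>R T x) y)" by (rule upm_add[OF S bop_scale[OF T]])
  also have "\<dots> = (\<lambda>y. \<Phi> S y - \<Phi> T y)" unfolding upm_scale[OF T] by simp
  finally show ?thesis .
qed

lemma upm_pos: "pos_op T \<Longrightarrow> pos_op (\<Phi> T)"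
  using U by (auto simp: unital_pos_map_def)

lemma upm_mono: assumes S: "S \<in> bop" and T: "T \<in> bop" and P: "pos_op (\<lambda>x. T x - S x)"
  shows "inner (\<Phi> S y) y \<le> inner (\<Phi> T y) y"
proof -
  have "pos_op (\<Phi> (\<lambda>x. T x - S x))" by (rule upm_pos[OF P])
  hence "pos_op (\<lambda>y. \<Phi> T y - \<Phi> S y)" by (simp add: upm_diff[OF T S])
  hence "0 \<le> inner (\<Phi> T y - \<Phi> S y) y" by (rule pos_op_nonneg)
  thus ?thesis by (simp add: inner_diff_left)
qed

lemma upm_lower: assumes H: "herm A" and lo: "\<And>x. m * (norm x)\<^sup>2 \<le> inner (A x) x"
  shows "m * (norm y)\<^sup>2 \<le> inner (\<Phi> A y) y"
proof -
  have "pos_op (\<lambda>x. A x - m *\<^sub>R x)" unfolding pos_op_iff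
    using lo by (auto intro!: herm_diff H herm_scaleI simp: inner_diff_left power2_norm_eq_inner)
  hence "inner (\<Phi> (\<lambda>x. m *\<^sub>R x) y) y \<le> inner (\<Phi> A y) y"
    by (rule upm_mono[OF bop_scaleI hermD(1)[OF H]])
  thus ?thesis by (simp add: upm_scaleI power2_norm_eq_inner)
qed

lemma upm_upper: assumes H: "herm A" and hi: "\<And>x. inner (A x) x \<le> M * (norm x)\<^sup>2"
  shows "inner (\<Phi> A y) y \<le> M * (norm y)\<^sup>2"
proof -
  have "pos_op (\<lambda>x. M *\<^sub>R x - A x)" unfolding pos_op_iff
    using hi by (auto intro!: herm_diff H herm_scaleI simp: inner_diff_left power2_norm_eq_inner)
  hence "inner (\<Phi> A y) y \<le> inner (\<Phi> (\<lambda>x. M *\<^sub>R x) y) y"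
    by (rule upm_mono[OF hermD(1)[OF H] bop_scaleI])
  thus ?thesis by (simp add: upm_scaleI power2_norm_eq_inner)
qed

lemma kant_basic:
  assumes H: "herm A" and m: "0 < m" and mM: "m < M"
    and lo: "\<And>x. m * (norm x)\<^sup>2 \<le> inner (A x) x" and hi: "\<And>x. inner (A x) x \<le> M * (norm x)\<^sup>2"
  shows "M * m * inner (\<Phi> (inv A) y) y \<le> (M + m) * (norm y)\<^sup>2 - inner (\<Phi> A y) y"
proof -
  note I = herm_inv[OF H m lo]
  let ?W = "inv A"
  note bA = hermD(1)[OF H] and bW = hermD(1)[OF I(2)]
  have PW: "pos_op ?W" unfolding pos_op_iff using I(2) I(6) by simp
  define Q where "Q = (\<lambda>x. (M + m) *\<^sub>R A x - A (A x) - (M * m) *\<^sub>R x)"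
  have AA: "herm (\<lambda>x. A (A x))" by (rule herm_commute[OF H H]) simp
  have HQ: "herm Q" unfolding Q_def
    by (rule herm_diff[OF herm_diff[OF herm_scale[OF H] AA] herm_scaleI])
  have iQ: "0 \<le> inner (Q x) x" for x
  proof -
    have "(norm (A x))\<^sup>2 \<le> (m + M) * inner (A x) x - m * M * (norm x)\<^sup>2" by (rule herm_sq_le[OF H lo hi])
    moreover have "inner (A (A x)) x = (norm (A x))\<^sup>2"
      using hermD(2)[OF H, of "A x" x] by (simp add: power2_norm_eq_inner)
    ultimately show ?thesis by (simp add: Q_def inner_diff_left power2_norm_eq_inner algebra_simps)
  qed
  have PQ: "pos_op Q" unfolding pos_op_iff using HQ iQ by simp
  have WQ: "?W (Q x) = (M + m) *\<^sub>R x - A x - (M * m) *\<^sub>R ?W x" for x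
    by (simp add: Q_def bop_linear[OF bW] I(4))
  have QW: "Q (?W x) = (M + m) *\<^sub>R x - A x - (M * m) *\<^sub>R ?W x" for x
    by (simp add: Q_def I(3))
  have "0 \<le> inner (?W (Q x)) x" for x by (rule pos_comm_prod[OF PW PQ]) (simp add: WQ QW)
  hence nn: "0 \<le> inner ((M + m) *\<^sub>R x - A x - (M * m) *\<^sub>R ?W x) x" for x by (simp add: WQ)
  define G where "G = (\<lambda>x. ((M + m) *\<^sub>R x - A x) - (M * m) *\<^sub>R ?W x)"
  have bG1: "(\<lambda>x. (M + m) *\<^sub>R x - A x) \<in> bop" by (intro bop_diff bop_scaleI bA)
  have HG: "herm G" unfolding G_def by (intro herm_diff herm_scale herm_scaleI H I(2))
  have PG: "pos_op G" unfolding pos_op_iff using HG nn by (simp add: G_def)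
  have "\<Phi> G = (\<lambda>y. \<Phi> (\<lambda>x. (M + m) *\<^sub>R x - A x) y - \<Phi> (\<lambda>x. (M * m) *\<^sub>R ?W x) y)"
    unfolding G_def by (rule upm_diff[OF bG1 bop_scale[OF bW]])
  also have "\<dots> = (\<lambda>y. ((M + m) *\<^sub>R y - \<Phi> A y) - (M * m) *\<^sub>R \<Phi> ?W y)"
    by (simp add: upm_diff[OF bop_scaleI bA] upm_scaleI upm_scale[OF bW])
  finally have PhiG: "\<Phi> G = (\<lambda>y. ((M + m) *\<^sub>R y - \<Phi> A y) - (M * m) *\<^sub>R \<Phi> ?W y)" .
  have "0 \<le> inner (\<Phi> G y) y" by (rule pos_op_nonneg[OF upm_pos[OF PG]])
  thus ?thesis by (simp add: PhiG inner_diff_left power2_norm_eq_inner algebra_simps)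
qed

lemma kant1:
  assumes H: "herm A" and m: "0 < m" and mM: "m < M"
    and lo: "\<And>x. m * (norm x)\<^sup>2 \<le> inner (A x) x" and hi: "\<And>x. inner (A x) x \<le> M * (norm x)\<^sup>2"
  shows "inner (\<Phi> (inv A) y) y \<le> ((M + m)\<^sup>2 / (4 * M * m)) * inner (inv (\<Phi> A) y) y"
proof -
  let ?X = "\<Phi> A"
  have "0 \<le> inner (A x) x" for x
  proof -
    have "0 \<le> m * (norm x)\<^sup>2" using m by simp
    thus ?thesis using lo[of x] by linarith
  qed
  hence PA: "pos_op A" unfolding pos_op_iff using H by simp
  have HX: "herm ?X" by (rule pos_op_herm[OF upm_pos[OF PA]])
  have Xlo: "m * (norm x)\<^sup>2 \<le> inner (?X x) x" for x by (rule upm_lower[OF H lo])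
  note I = herm_inv[OF HX m Xlo]
  define c where "c = (M + m) / 2"
  define z where "z = ?X y - c *\<^sub>R y"
  have "0 \<le> inner (inv ?X z) z" by (rule I(6))
  also have "inv ?X z = y - c *\<^sub>R inv ?X y" by (simp add: z_def bop_linear[OF hermD(1)[OF I(2)]] I(4))
  finally have h0: "0 \<le> inner (y - c *\<^sub>R inv ?X y) (?X y - c *\<^sub>R y)" by (simp add: z_def)
  have h2: "inner (inv ?X y) (?X y) = (norm y)\<^sup>2"
    using hermD(2)[OF HX, of "inv ?X y" y] by (simp add: I(3) power2_norm_eq_inner)
  have h1: "inner (y - c *\<^sub>R inv ?X y) (?X y - c *\<^sub>R y) =
      inner y (?X y) - c * inner y y - c * inner (inv ?X y) (?X y) + c * c * inner (inv ?X y) y"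
    by (simp add: inner_diff_left inner_diff_right algebra_simps)
  have h3: "inner y (?X y) = inner (?X y) y" by (rule inner_commute)
  have h4: "inner y y = (norm y)\<^sup>2" by (simp add: power2_norm_eq_inner)
  have h6: "c * c = c\<^sup>2" by (simp add: power2_eq_square)
  have h7: "0 \<le> inner (?X y) y - c * (norm y)\<^sup>2 - c * (norm y)\<^sup>2 + c\<^sup>2 * inner (inv ?X y) y"
    using h0 unfolding h1 h2 h3 h4 h6 .
  have h5: "c * (norm y)\<^sup>2 + c * (norm y)\<^sup>2 = (M + m) * (norm y)\<^sup>2" by (simp add: c_def field_simps)
  have a: "(M + m) * (norm y)\<^sup>2 - inner (?X y) y \<le> c\<^sup>2 * inner (inv ?X y) y"
    using h7 unfolding h5[symmetric] by linarith
  have b: "M * m * inner (\<Phi> (inv A) y) y \<le> (M + m) * (norm y)\<^sup>2 - inner (?X y) y"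
    by (rule kant_basic[OF H m mM lo hi])
  have Mm: "M * m > 0" using m mM by simp
  have K2: "M * m * (((M + m)\<^sup>2 / (4 * M * m)) * inner (inv ?X y) y) = c\<^sup>2 * inner (inv ?X y) y"
  proof -
    have "M \<noteq> 0" "m \<noteq> 0" using m mM by auto
    hence "M * m * ((M + m)\<^sup>2 / (4 * M * m)) = c\<^sup>2"
      by (simp add: c_def power2_eq_square)
    thus ?thesis by (metis mult.assoc)
  qed
  have "M * m * inner (\<Phi> (inv A) y) y \<le> M * m * (((M + m)\<^sup>2 / (4 * M * m)) * inner (inv ?X y) y)"
    unfolding K2 using a b by linarith
  thus ?thesis using Mm by (simp only: mult_le_cancel_left_pos)
qed

end


lemma kappa_facts:
  assumes m: "0 < m" and mM: "m < M" and k: "\<kappa> = (M + m) / (2 * sqrt (M * m))"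
  shows "0 < \<kappa>" "\<kappa>\<^sup>2 = (M + m)\<^sup>2 / (4 * M * m)" "\<kappa> * sqrt (M * m) = (M + m) / 2"
proof -
  have Mm: "0 < M * m" using m mM by simp
  hence sq: "0 < sqrt (M * m)" by simp
  show "0 < \<kappa>" using m mM sq by (simp add: k)
  have "\<kappa>\<^sup>2 = (M + m)\<^sup>2 / (2 * sqrt (M * m))\<^sup>2" by (simp add: k power_divide)
  also have "(2 * sqrt (M * m))\<^sup>2 = 4 * (M * m)" using Mm by (simp add: power_mult_distrib)
  finally show "\<kappa>\<^sup>2 = (M + m)\<^sup>2 / (4 * M * m)" by (simp add: mult.assoc)
  have "0 < M" using m mM by simp
  thus "\<kappa> * sqrt (M * m) = (M + m) / 2" using m by (simp add: k)
qed

lemma P1_holds: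
  fixes A :: "'a::chilbert \<Rightarrow> 'a" and \<Phi> :: "('a \<Rightarrow> 'a) \<Rightarrow> ('b::chilbert \<Rightarrow> 'b)"
  assumes U: "unital_pos_map \<Phi>" and H: "herm A" and m: "0 < m" and mM: "m < M"
    and lo: "\<And>x. m * (norm x)\<^sup>2 \<le> inner (A x) x" and hi: "\<And>x. inner (A x) x \<le> M * (norm x)\<^sup>2"
    and k: "\<kappa> = (M + m) / (2 * sqrt (M * m))"
  shows "loewner_le (\<Phi> (op_inv A)) (\<lambda>y. \<kappa>\<^sup>2 *\<^sub>R op_inv (\<Phi> A) y)"
proof -
  note I = herm_inv[OF H m lo]
  have PW: "pos_op (inv A)" unfolding pos_op_iff using I(2) I(6) by simp
  have HW: "herm (\<Phi> (inv A))" by (rule pos_op_herm[OF upm_pos[OF U PW]])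
  have "0 \<le> inner (A x) x" for x
  proof -
    have "0 \<le> m * (norm x)\<^sup>2" using m by simp
    thus ?thesis using lo[of x] by linarith
  qed
  hence PA: "pos_op A" unfolding pos_op_iff using H by simp
  have HX: "herm (\<Phi> A)" by (rule pos_op_herm[OF upm_pos[OF U PA]])
  have Xlo: "m * (norm x)\<^sup>2 \<le> inner (\<Phi> A x) x" for x by (rule upm_lower[OF U H lo])
  note IX = herm_inv[OF HX m Xlo]
  have HR: "herm (\<lambda>y. \<kappa>\<^sup>2 *\<^sub>R inv (\<Phi> A) y)" by (rule herm_scale[OF IX(2)])
  show ?thesis unfolding op_inv_def loewner_le_herm[OF HW HR]
  proof
    fix y
    have "inner (\<Phi> (inv A) y) y \<le> ((M + m)\<^sup>2 / (4 * M * m)) * inner (inv (\<Phi> A) y) y"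
      by (rule kant1[OF U H m mM lo hi])
    thus "inner (\<Phi> (inv A) y) y \<le> inner (\<kappa>\<^sup>2 *\<^sub>R inv (\<Phi> A) y) y"
      by (simp add: kappa_facts[OF m mM k])
  qed
qed

lemma P2_holds:
  fixes A :: "'a::chilbert \<Rightarrow> 'a" and \<Phi> :: "('a \<Rightarrow> 'a) \<Rightarrow> ('b::chilbert \<Rightarrow> 'b)"
  assumes U: "unital_pos_map \<Phi>" and H: "herm A" and m: "0 < m" and mM: "m < M"
    and lo: "\<And>x. m * (norm x)\<^sup>2 \<le> inner (A x) x" and hi: "\<And>x. inner (A x) x \<le> M * (norm x)\<^sup>2"
    and k: "\<kappa> = (M + m) / (2 * sqrt (M * m))" and x1: "norm x = 1"
  shows "Re (cinner (\<Phi> (op_inv A) x) x) \<le> \<kappa>\<^sup>2 * inverse (Re (cinner (\<Phi> A x) x))"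
proof -
  define t where "t = inner (\<Phi> A x) x"
  define w where "w = inner (\<Phi> (inv A) x) x"
  have t1: "m \<le> t" using upm_lower[OF U H lo, of x] x1 by (simp add: t_def)
  have t2: "t \<le> M" using upm_upper[OF U H hi, of x] x1 by (simp add: t_def)
  have t0: "0 < t" using t1 m by simp
  have Mm: "0 < M * m" using m mM by simp
  have b: "M * m * w \<le> (M + m) - t"
    using kant_basic[OF U H m mM lo hi, of x] x1 by (simp add: t_def w_def)
  have "(M + m)\<^sup>2 / 4 - ((M + m) - t) * t = (t - (M + m) / 2)\<^sup>2"
    by (simp add: power2_eq_square field_simps)
  hence c: "((M + m) - t) * t \<le> (M + m)\<^sup>2 / 4" by (smt (verit) zero_le_power2)
  have "M * m * w * t \<le> ((M + m) - t) * t" using b t0 by (intro mult_right_mono) auto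
  hence "M * m * w * t \<le> (M + m)\<^sup>2 / 4" using c by (rule order_trans)
  hence "M * m * (w * t) \<le> (M + m)\<^sup>2 / 4" by (simp only: mult.assoc)
  also have "(M + m)\<^sup>2 / 4 = M * m * ((M + m)\<^sup>2 / (4 * M * m))"
  proof -
    have "M \<noteq> 0" "m \<noteq> 0" using m mM by auto
    thus ?thesis by (simp add: field_simps)
  qed
  finally have "M * m * (w * t) \<le> M * m * ((M + m)\<^sup>2 / (4 * M * m))" .
  hence "w * t \<le> (M + m)\<^sup>2 / (4 * M * m)" using Mm by (simp only: mult_le_cancel_left_pos)
  hence "w \<le> (M + m)\<^sup>2 / (4 * M * m) / t" by (simp only: pos_le_divide_eq[OF t0])
  moreover have "Re (cinner (\<Phi> (op_inv A) x) x) = w" unfolding re_cinner op_inv_def w_def ..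
  moreover have "Re (cinner (\<Phi> A x) x) = t" unfolding re_cinner t_def ..
  ultimately show ?thesis unfolding kappa_facts(2)[OF m mM k] by (simp only: divide_inverse)
qed

lemma P4_holds:
  fixes A :: "'a::chilbert \<Rightarrow> 'a" and \<Phi> :: "('a \<Rightarrow> 'a) \<Rightarrow> ('b::chilbert \<Rightarrow> 'b)"
  assumes U: "unital_pos_map \<Phi>" and H: "herm A" and m: "0 < m" and mM: "m < M"
    and lo: "\<And>x. m * (norm x)\<^sup>2 \<le> inner (A x) x" and hi: "\<And>x. inner (A x) x \<le> M * (norm x)\<^sup>2"
    and k: "\<kappa> = (M + m) / (2 * sqrt (M * m))"
  shows "loewner_le (\<Phi> (A \<circ> A)) (\<lambda>y. \<kappa>\<^sup>2 *\<^sub>R (\<Phi> A \<circ> \<Phi> A) y)"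
proof -
  note bA = hermD(1)[OF H]
  have AAc: "A \<circ> A = (\<lambda>x. A (A x))" by (simp add: comp_def)
  have HAA: "herm (A \<circ> A)" unfolding AAc by (rule herm_commute[OF H H]) simp
  have iAA: "inner (A (A x)) x = (norm (A x))\<^sup>2" for x
    using hermD(2)[OF H, of "A x" x] by (simp add: power2_norm_eq_inner)
  have PAA: "pos_op (A \<circ> A)" unfolding pos_op_iff using HAA iAA by simp
  have H1: "herm (\<Phi> (A \<circ> A))" by (rule pos_op_herm[OF upm_pos[OF U PAA]])
  have "0 \<le> inner (A x) x" for x
  proof -
    have "0 \<le> m * (norm x)\<^sup>2" using m by simp
    thus ?thesis using lo[of x] by linarith
  qed
  hence PA: "pos_op A" unfolding pos_op_iff using H by simp
  have HX: "herm (\<Phi> A)" by (rule pos_op_herm[OF upm_pos[OF U PA]])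
  have XXc: "\<Phi> A \<circ> \<Phi> A = (\<lambda>x. \<Phi> A (\<Phi> A x))" by (simp add: comp_def)
  have HXX: "herm (\<Phi> A \<circ> \<Phi> A)" unfolding XXc by (rule herm_commute[OF HX HX]) simp
  have H2: "herm (\<lambda>y. \<kappa>\<^sup>2 *\<^sub>R (\<Phi> A \<circ> \<Phi> A) y)" by (rule herm_scale[OF HXX])
  define G where "G = (\<lambda>x. ((M + m) *\<^sub>R A x - (M * m) *\<^sub>R x) - (A \<circ> A) x)"
  have bG1: "(\<lambda>x. (M + m) *\<^sub>R A x - (M * m) *\<^sub>R x) \<in> bop" by (intro bop_diff bop_scale bA bop_scaleI)
  have HG: "herm G" unfolding G_def by (intro herm_diff herm_scale H herm_scaleI HAA)
  have "0 \<le> inner (G x) x" for x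
  proof -
    have "(norm (A x))\<^sup>2 \<le> (m + M) * inner (A x) x - m * M * (norm x)\<^sup>2" by (rule herm_sq_le[OF H lo hi])
    thus ?thesis by (simp add: G_def inner_diff_left iAA power2_norm_eq_inner algebra_simps)
  qed
  hence PG: "pos_op G" unfolding pos_op_iff using HG by simp
  have "\<Phi> G = (\<lambda>y. \<Phi> (\<lambda>x. (M + m) *\<^sub>R A x - (M * m) *\<^sub>R x) y - \<Phi> (A \<circ> A) y)"
    unfolding G_def by (rule upm_diff[OF U bG1 hermD(1)[OF HAA]])
  also have "\<dots> = (\<lambda>y. ((M + m) *\<^sub>R \<Phi> A y - (M * m) *\<^sub>R y) - \<Phi> (A \<circ> A) y)"
    by (simp add: upm_diff[OF U bop_scale[OF bA] bop_scaleI] upm_scaleI[OF U] upm_scale[OF U bA])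
  finally have PhiG: "\<Phi> G = (\<lambda>y. ((M + m) *\<^sub>R \<Phi> A y - (M * m) *\<^sub>R y) - \<Phi> (A \<circ> A) y)" .
  show ?thesis unfolding loewner_le_herm[OF H1 H2]
  proof
    fix y
    have "0 \<le> inner (\<Phi> G y) y" by (rule pos_op_nonneg[OF upm_pos[OF U PG]])
    hence a: "inner (\<Phi> (A \<circ> A) y) y \<le> (M + m) * inner (\<Phi> A y) y - M * m * (norm y)\<^sup>2"
      by (simp add: PhiG inner_diff_left power2_norm_eq_inner)
    define d where "d = sqrt (M * m)"
    have kd: "\<kappa> * d = (M + m) / 2" unfolding d_def by (rule kappa_facts(3)[OF m mM k])
    have d2: "d * d = M * m" using m mM by (simp add: d_def)
    let ?v = "\<kappa> *\<^sub>R \<Phi> A y - d *\<^sub>R y"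
    have "inner ?v ?v = \<kappa> * \<kappa> * inner (\<Phi> A y) (\<Phi> A y) - 2 * (\<kappa> * d) * inner (\<Phi> A y) y + d * d * inner y y"
      by (simp add: inner_diff_left inner_diff_right inner_commute[of y "\<Phi> A y"] algebra_simps)
    also have "\<dots> = \<kappa>\<^sup>2 * inner (\<Phi> A (\<Phi> A y)) y - (M + m) * inner (\<Phi> A y) y + M * m * (norm y)\<^sup>2"
    proof -
      have i1: "inner (\<Phi> A y) (\<Phi> A y) = inner (\<Phi> A (\<Phi> A y)) y" using hermD(2)[OF HX, of "\<Phi> A y" y] by simp
      have i2: "inner y y = (norm y)\<^sup>2" by (simp add: power2_norm_eq_inner)
      have kk: "\<kappa> * \<kappa> = \<kappa>\<^sup>2" by (simp add: power2_eq_square)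
      have k2: "2 * (\<kappa> * d) = M + m" using kd by simp
      show ?thesis unfolding i1 i2 kk d2 k2 ..
    qed
    finally have "0 \<le> \<kappa>\<^sup>2 * inner (\<Phi> A (\<Phi> A y)) y - (M + m) * inner (\<Phi> A y) y + M * m * (norm y)\<^sup>2"
      by (metis inner_ge_zero)
    thus "inner (\<Phi> (A \<circ> A) y) y \<le> inner (\<kappa>\<^sup>2 *\<^sub>R (\<Phi> A \<circ> \<Phi> A) y) y" using a by simp
  qed
qed


lemma P3_holds:
  fixes A :: "'a::chilbert \<Rightarrow> 'a" and \<Phi> :: "('a \<Rightarrow> 'a) \<Rightarrow> ('b::chilbert \<Rightarrow> 'b)"
  assumes U: "unital_pos_map \<Phi>" and H: "herm A" and m: "0 < m" and mM: "m < M"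
    and lo: "\<And>x. m * (norm x)\<^sup>2 \<le> inner (A x) x" and hi: "\<And>x. inner (A x) x \<le> M * (norm x)\<^sup>2"
    and k: "\<kappa> = (M + m) / (2 * sqrt (M * m))"
  shows "loewner_le (gmean (\<Phi> (op_inv A)) (\<Phi> A)) (\<lambda>y. \<kappa> *\<^sub>R y)"
proof -
  have M0: "0 < M" using m mM by simp
  note I = herm_inv[OF H m lo]
  let ?Ai = "inv A"
  have HAi: "herm ?Ai" by (rule I(2))
  have Ailo: "(1 / M) * (norm y)\<^sup>2 \<le> inner (?Ai y) y" for y by (rule herm_inv_bounds(1)[OF H m M0 lo hi])
  have Aihi: "inner (?Ai y) y \<le> (1 / m) * (norm y)\<^sup>2" for y by (rule herm_inv_bounds(2)[OF H m M0 lo hi])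
  have m': "0 < 1 / M" using M0 by simp
  have mM': "1 / M < 1 / m" using m mM by (simp add: frac_less2)
  have AiAi: "inv ?Ai = A" by (rule inv_inv_eq[OF I(1)])
  define Xi where "Xi = \<Phi> ?Ai"
  define Y where "Y = \<Phi> A"
  have "0 \<le> inner (A x) x" for x
  proof -
    have "0 \<le> m * (norm x)\<^sup>2" using m by simp
    thus ?thesis using lo[of x] by linarith
  qed
  hence PA: "pos_op A" unfolding pos_op_iff using H by simp
  have PY: "pos_op Y" unfolding Y_def by (rule upm_pos[OF U PA])
  have PAi: "pos_op ?Ai" unfolding pos_op_iff using I(2) I(6) by simp
  have PXi: "pos_op Xi" unfolding Xi_def by (rule upm_pos[OF U PAi])
  have HXi: "herm Xi" by (rule pos_op_herm[OF PXi])
  have bXi: "bounded_linear Xi" by (rule bopD(1)[OF hermD(1)[OF HXi]])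
  have Xilo: "(1 / M) * (norm y)\<^sup>2 \<le> inner (Xi y) y" for y unfolding Xi_def by (rule upm_lower[OF U HAi Ailo])
  have Xihi: "inner (Xi y) y \<le> (1 / m) * (norm y)\<^sup>2" for y unfolding Xi_def by (rule upm_upper[OF U HAi Aihi])
  note IX = herm_inv[OF HXi m' Xilo]
  let ?Xinv = "inv Xi"
  have HXinv: "herm ?Xinv" by (rule IX(2))
  have Xinvlo: "(1 / (1 / m)) * (norm y)\<^sup>2 \<le> inner (?Xinv y) y" for y
    by (rule herm_inv_bounds(1)[OF HXi m' _ Xilo Xihi]) (use m in simp)
  have K2eq: "(1 / m + 1 / M)\<^sup>2 / (4 * (1 / m) * (1 / M)) = (M + m)\<^sup>2 / (4 * M * m)"
    using m M0 by (simp add: field_simps power2_eq_square)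
  have YK: "inner (Y y) y \<le> \<kappa>\<^sup>2 * inner (?Xinv y) y" for y
  proof -
    have "inner (\<Phi> (inv ?Ai) y) y \<le> ((1 / m + 1 / M)\<^sup>2 / (4 * (1 / m) * (1 / M))) * inner (inv (\<Phi> ?Ai) y) y"
      by (rule kant1[OF U HAi m' mM' Ailo Aihi])
    thus ?thesis unfolding AiAi K2eq kappa_facts(2)[OF m mM k, symmetric] Y_def Xi_def .
  qed
  define s where "s = op_sqrt Xi"
  note S = op_sqrt[OF PXi, folded s_def]
  have Hs: "herm s" by (rule pos_op_herm[OF S(1)])
  have sXi: "Xi (s x) = s (Xi x)" for x by (rule S(3)[OF bXi]) simp
  have sXinv: "?Xinv (s x) = s (?Xinv x)" for x
  proof -
    have "?Xinv (s x) = ?Xinv (s (Xi (?Xinv x)))" using IX(3)[of x] by simp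
    also have "\<dots> = ?Xinv (Xi (s (?Xinv x)))" by (simp add: sXi)
    also have "\<dots> = s (?Xinv x)" by (simp add: IX(4))
    finally show ?thesis .
  qed
  define si where "si = (\<lambda>y. s (?Xinv y))"
  have Hsi: "herm si" unfolding si_def by (rule herm_commute[OF Hs HXinv]) (simp add: sXinv)
  have s_si: "s (si y) = y" for y
  proof -
    have "s (si y) = s (s (?Xinv y))" by (simp add: si_def)
    also have "\<dots> = Xi (?Xinv y)" by (rule S(2))
    also have "\<dots> = y" by (rule IX(3))
    finally show ?thesis .
  qed
  have si_s: "si (s x) = x" for x by (simp add: si_def sXinv S(2) IX(3))
  have inv_s: "op_inv s = si" unfolding op_inv_def by (rule inv_equality[OF si_s s_si])
  have sisi: "si (si y) = ?Xinv y" for y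
  proof -
    have "si (si y) = s (s (?Xinv (?Xinv y)))" by (simp add: si_def sXinv)
    also have "\<dots> = ?Xinv y" by (simp add: S(2) IX(3))
    finally show ?thesis .
  qed
  define C where "C = si \<circ> Y \<circ> si"
  have Cc: "C = (\<lambda>x. si (Y (si x)))" by (simp add: C_def comp_def)
  have PC: "pos_op C" unfolding Cc by (rule pos_cong[OF PY Hsi])
  define r where "r = op_sqrt C"
  note R = op_sqrt[OF PC, folded r_def]
  have Hr: "herm r" by (rule pos_op_herm[OF R(1)])
  define D where "D = (\<lambda>x. \<kappa> *\<^sub>R ?Xinv x)"
  have HD: "herm D" unfolding D_def by (rule herm_scale[OF HXinv])
  have k0: "0 < \<kappa>" by (rule kappa_facts(1)[OF m mM k])
  have Dlo: "(\<kappa> * m) * (norm x)\<^sup>2 \<le> inner (D x) x" for x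
    using mult_left_mono[OF Xinvlo[of x] less_imp_le[OF k0]] m by (simp add: D_def mult.assoc)
  have sq: "(norm (r x))\<^sup>2 \<le> (norm (D x))\<^sup>2" for x
  proof -
    have "(norm (r x))\<^sup>2 = inner (r x) (r x)" by (simp add: power2_norm_eq_inner)
    also have "\<dots> = inner (r (r x)) x" by (rule hermD(2)[OF Hr, symmetric])
    also have "\<dots> = inner (si (Y (si x))) x" by (simp add: R(2) Cc)
    also have "\<dots> = inner (Y (si x)) (si x)" by (rule hermD(2)[OF Hsi])
    also have "\<dots> \<le> \<kappa>\<^sup>2 * inner (?Xinv (si x)) (si x)" by (rule YK)
    also have "inner (?Xinv (si x)) (si x) = inner (si (si (si x))) (si x)" by (simp only: sisi[of "si x"])
    also have "\<dots> = inner (si (si x)) (si (si x))" by (rule hermD(2)[OF Hsi])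
    also have "\<dots> = inner (?Xinv x) (?Xinv x)" by (simp add: sisi)
    also have "\<kappa>\<^sup>2 * inner (?Xinv x) (?Xinv x) = inner (D x) (D x)"
      by (simp add: D_def power2_eq_square)
    also have "\<dots> = (norm (D x))\<^sup>2" by (rule power2_norm_eq_inner[symmetric])
    finally show ?thesis .
  qed
  have rD: "inner (r x) x \<le> inner (D x) x" for x
    by (rule sqrt_mono[OF R(1) HD _ Dlo sq]) (use k0 m in simp)
  have gm: "gmean (\<Phi> (op_inv A)) (\<Phi> A) = (\<lambda>x. s (r (s x)))"
    unfolding gmean_def op_inv_def[of A] Xi_def[symmetric] Y_def[symmetric] s_def[symmetric]
      inv_s C_def[symmetric] r_def[symmetric] by (simp add: comp_def)
  have Hg: "herm (\<lambda>x. s (r (s x)))" by (rule herm_cong[OF Hs Hr])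
  show ?thesis unfolding gm loewner_le_herm[OF Hg herm_scaleI]
  proof
    fix x
    have "inner (s (r (s x))) x = inner (r (s x)) (s x)" by (rule hermD(2)[OF Hs])
    also have "\<dots> \<le> inner (D (s x)) (s x)" by (rule rD)
    also have "\<dots> = \<kappa> * inner (s (?Xinv x)) (s x)" by (simp add: D_def sXinv)
    also have "inner (s (?Xinv x)) (s x) = inner (s (s (?Xinv x))) x" by (rule hermD(2)[OF Hs, symmetric])
    also have "\<dots> = inner x x" by (simp add: S(2) IX(3))
    finally show "inner (s (r (s x))) x \<le> inner (\<kappa> *\<^sub>R x) x" by simp
  qed
qed


theorem mainTheorem2:
  fixes A :: "'a::chilbert \<Rightarrow> 'a" and m M :: real
  assumes "A \<in> bop" and "0 < m" and "m < M"
    and "loewner_le (\<lambda>x. m *\<^sub>R x) A" and "loewner_le A (\<lambda>x. M *\<^sub>R x)"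
  defines "\<kappa> \<equiv> (M + m) / (2 * sqrt (M * m))"
  shows "let
      P1 = (\<forall>\<Phi> :: ('a \<Rightarrow> 'a) \<Rightarrow> ('b::chilbert \<Rightarrow> 'b). unital_pos_map \<Phi> \<longrightarrow>
              loewner_le (\<Phi> (op_inv A)) (\<lambda>y. \<kappa>\<^sup>2 *\<^sub>R op_inv (\<Phi> A) y));
      P2 = (\<forall>\<Phi> :: ('a \<Rightarrow> 'a) \<Rightarrow> ('b \<Rightarrow> 'b). unital_pos_map \<Phi> \<longrightarrow>
              (\<forall>x. norm x = 1 \<longrightarrow>
                 Re (cinner (\<Phi> (op_inv A) x) x) \<le> \<kappa>\<^sup>2 * inverse (Re (cinner (\<Phi> A x) x))));
      P3 = (\<forall>\<Phi> :: ('a \<Rightarrow> 'a) \<Rightarrow> ('b \<Rightarrow> 'b). unital_pos_map \<Phi> \<longrightarrow>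
              loewner_le (gmean (\<Phi> (op_inv A)) (\<Phi> A)) (\<lambda>y. \<kappa> *\<^sub>R y));
      P4 = (\<forall>\<Phi> :: ('a \<Rightarrow> 'a) \<Rightarrow> ('b \<Rightarrow> 'b). unital_pos_map \<Phi> \<longrightarrow>
              loewner_le (\<Phi> (A \<circ> A)) (\<lambda>y. \<kappa>\<^sup>2 *\<^sub>R (\<Phi> A \<circ> \<Phi> A) y))
    in (P1 \<longleftrightarrow> P2) \<and> (P1 \<longleftrightarrow> P3) \<and> (P1 \<longleftrightarrow> P4)"
proof -
  have k: "\<kappa> = (M + m) / (2 * sqrt (M * m))" by (simp add: \<kappa>_def)
  have HAm: "herm (\<lambda>x. A x - m *\<^sub>R x)" and lo0: "\<And>x. inner (m *\<^sub>R x) x \<le> inner (A x) x"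
    using assms(4) unfolding loewner_le_iff by auto
  have hi0: "\<And>x. inner (A x) x \<le> inner (M *\<^sub>R x) x"
    using assms(5) unfolding loewner_le_iff by auto
  have "herm (\<lambda>x. (A x - m *\<^sub>R x) + m *\<^sub>R x)" by (rule herm_add[OF HAm herm_scaleI])
  hence H: "herm A" by simp
  have lo: "m * (norm x)\<^sup>2 \<le> inner (A x) x" for x using lo0[of x] by (simp add: power2_norm_eq_inner)
  have hi: "inner (A x) x \<le> M * (norm x)\<^sup>2" for x using hi0[of x] by (simp add: power2_norm_eq_inner)
  have P1: "\<forall>\<Phi> :: ('a \<Rightarrow> 'a) \<Rightarrow> ('b::chilbert \<Rightarrow> 'b). unital_pos_map \<Phi> \<longrightarrow>
              loewner_le (\<Phi> (op_inv A)) (\<lambda>y. \<kappa>\<^sup>2 *\<^sub>R op_inv (\<Phi> A) y)"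
    using P1_holds[OF _ H assms(2,3) lo hi k] by blast
  have P2: "\<forall>\<Phi> :: ('a \<Rightarrow> 'a) \<Rightarrow> ('b \<Rightarrow> 'b). unital_pos_map \<Phi> \<longrightarrow>
              (\<forall>x. norm x = 1 \<longrightarrow>
                 Re (cinner (\<Phi> (op_inv A) x) x) \<le> \<kappa>\<^sup>2 * inverse (Re (cinner (\<Phi> A x) x)))"
    using P2_holds[OF _ H assms(2,3) lo hi k] by blast
  have P3: "\<forall>\<Phi> :: ('a \<Rightarrow> 'a) \<Rightarrow> ('b \<Rightarrow> 'b). unital_pos_map \<Phi> \<longrightarrow>
              loewner_le (gmean (\<Phi> (op_inv A)) (\<Phi> A)) (\<lambda>y. \<kappa> *\<^sub>R y)"
    using P3_holds[OF _ H assms(2,3) lo hi k] by blast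
  have P4: "\<forall>\<Phi> :: ('a \<Rightarrow> 'a) \<Rightarrow> ('b \<Rightarrow> 'b). unital_pos_map \<Phi> \<longrightarrow>
              loewner_le (\<Phi> (A \<circ> A)) (\<lambda>y. \<kappa>\<^sup>2 *\<^sub>R (\<Phi> A \<circ> \<Phi> A) y)"
    using P4_holds[OF _ H assms(2,3) lo hi k] by blast
  show ?thesis unfolding Let_def using P1 P2 P3 P4 by blast
qed

end
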